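(* Let $p$ be an odd prime, $k\geq 2$ an integer, $R=\mathbb{Z}/p^k\mathbb{Z}$, and $\widehat{X}=\mathrm{SL}_2(R)$. Let $w\in R^\times$ have order $p-1$. Let $$P=\left\{I+p^{k-1}\begin{pmatrix}0&b\\c&0\end{pmatrix}: b,c\in R\right\},\quad Q=\left\langle\begin{pmatrix}w&0\\0&w^{-1}\end{pmatrix},\begin{pmatrix}0&1\\-1&0\end{pmatrix}\right\rangle,$$ and $\widehat{Y}=\langle P,Q\rangle$. Let $\varphi:\widehat{X}\to\mathrm{SL}_2(p)$ be the epimorphism induced by the natural ring epimorphism $R\to\mathbb{F}_p$, let $\widehat{N}=\ker\varphi$, and let $Z=\{\pm I\}$. Let $X=\widehat{X}/Z$, $Y=\widehat{Y}/Z$ and $N=\widehat{N}Z/Z$. Then $N\cong\widehat{N}$; $\widehat{N}$ has a chain of subgroups $\widehat{N}=N_1>N_2>\cdots>N_k=1$, each normal in $\widehat{X}$, with $N_\ell/N_{\ell+1}\cong\mathrm{C}_p^3$ for every $\ell\in\{1,\ldots,k-1\}$; and $Y\cap N=PZ/Z\cong\mathrm{C}_p^2$.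
   Context: $I$ is the $2\times 2$ identity matrix and $\mathrm{C}_n$ the cyclic group of order $n$. *)

theory Defs
  imports "HOL-Algebra.Algebra" "HOL-Number_Theory.Number_Theory"
begin

text \<open>A 2x2 matrix (a b; c d) over Z/mZ is represented by the tuple (a,b,c,d) of
  integer representatives in {0..<m}.\<close>
type_synonym mat2 = "int \<times> int \<times> int \<times> int"

definition mat_mult_mod :: "int \<Rightarrow> mat2 \<Rightarrow> mat2 \<Rightarrow> mat2" where
  "mat_mult_mod m A B = (case A of (a1,a2,a3,a4) \<Rightarrow> case B of (b1,b2,b3,b4) \<Rightarrow>
     ((a1*b1 + a2*b3) mod m, (a1*b2 + a2*b4) mod m, (a3*b1 + a4*b3) mod m, (a3*b2 + a4*b4) mod m))"

definition SL2 :: "int \<Rightarrow> mat2 monoid" where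
  "SL2 m = \<lparr> carrier = {(a1,a2,a3,a4). a1 \<in> {0..<m} \<and> a2 \<in> {0..<m} \<and> a3 \<in> {0..<m} \<and> a4 \<in> {0..<m}
                                    \<and> (a1*a4 - a2*a3) mod m = 1 mod m},
            monoid.mult = mat_mult_mod m,
            one = (1 mod m, 0, 0, 1 mod m) \<rparr>"

definition reduce_mod :: "int \<Rightarrow> mat2 \<Rightarrow> mat2" where
  "reduce_mod n A = (case A of (a1,a2,a3,a4) \<Rightarrow> (a1 mod n, a2 mod n, a3 mod n, a4 mod n))"

definition centre_pm :: "int \<Rightarrow> mat2 set" where
  "centre_pm m = {(1 mod m, 0, 0, 1 mod m), ((-1) mod m, 0, 0, (-1) mod m)}"

definition Pgrp :: "int \<Rightarrow> nat \<Rightarrow> mat2 set" where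
  "Pgrp p k = {(1 mod p^k, (p^(k-1) * b) mod p^k, (p^(k-1) * c) mod p^k, 1 mod p^k) | b c.
                 b \<in> {0..<p^k} \<and> c \<in> {0..<p^k}}"

definition inv_modm :: "int \<Rightarrow> int \<Rightarrow> int" where
  "inv_modm m w = (THE v. v \<in> {0..<m} \<and> (w * v) mod m = 1 mod m)"

definition Qgens :: "int \<Rightarrow> int \<Rightarrow> mat2 set" where
  "Qgens m w = {(w mod m, 0, 0, inv_modm m w), (0, 1 mod m, (-1) mod m, 0)}"

abbreviation cyc :: "nat \<Rightarrow> int monoid" where
  "cyc n \<equiv> integer_mod_group n"

end

theory Submission
  imports Defs
begin


lemma carrier_SL2: "carrier (SL2 m) = {(a1,a2,a3,a4). a1 \<in> {0..<m} \<and> a2 \<in> {0..<m} \<and> a3 \<in> {0..<m} \<and> a4 \<in> {0..<m}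
                                    \<and> (a1*a4 - a2*a3) mod m = 1 mod m}"
  by (simp add: SL2_def)
lemma mult_SL2: "x \<otimes>\<^bsub>SL2 m\<^esub> y = mat_mult_mod m x y" by (simp add: SL2_def)
lemma one_SL2: "\<one>\<^bsub>SL2 m\<^esub> = (1 mod m, 0, 0, 1 mod m)" by (simp add: SL2_def)

lemma mmm: "mat_mult_mod m (a1,a2,a3,a4) (b1,b2,b3,b4) =
     ((a1*b1 + a2*b3) mod m, (a1*b2 + a2*b4) mod m, (a3*b1 + a4*b3) mod m, (a3*b2 + a4*b4) mod m)"
  by (simp add: mat_mult_mod_def)

lemma Lm: fixes m :: int shows "(x + y mod m * z) mod m = (x + y * z) mod m"
proof -
  have "(x + y mod m * z) mod m = (x + (y mod m * z) mod m) mod m" by (rule mod_add_right_eq[symmetric])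
  also have "(y mod m * z) mod m = (y*z) mod m" by (rule mod_mult_left_eq)
  also have "(x + (y*z) mod m) mod m = (x + y*z) mod m" by (rule mod_add_right_eq)
  finally show ?thesis .
qed
lemma Lm2: fixes m :: int shows "(y mod m * z + x) mod m = (y * z + x) mod m"
  using Lm[of x y m z] by (simp add: add.commute)
lemma Lm3: fixes m :: int shows "(x + z * (y mod m)) mod m = (x + z * y) mod m"
  using Lm[of x y m z] by (simp add: mult.commute)
lemma Lm4: fixes m :: int shows "(z * (y mod m) + x) mod m = (z * y + x) mod m"
  using Lm[of x y m z] by (simp add: mult.commute add.commute)

lemma L1: fixes m :: int shows "(y mod m * x + v mod m * u) mod m = (y * x + v * u) mod m"
  by (simp only: Lm Lm2)
lemma L2: fixes m :: int shows "(x * (y mod m) + u * (v mod m)) mod m = (x * y + u * v) mod m"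
  by (simp only: Lm3 Lm4)

lemma P1: fixes a1 a2 b1 b2 b3 b4 c1 c3 :: int shows
  "(a1 * b1 + a2 * b3) * c1 + (a1 * b2 + a2 * b4) * c3 = a1 * (b1 * c1 + b2 * c3) + a2 * (b3 * c1 + b4 * c3)"
  by (simp add: algebra_simps)

lemma mmm_assoc: "mat_mult_mod m (mat_mult_mod m x y) z = mat_mult_mod m x (mat_mult_mod m y z)"
proof -
  obtain a1 a2 a3 a4 where x: "x = (a1,a2,a3,a4)" by (cases x) auto
  obtain b1 b2 b3 b4 where y: "y = (b1,b2,b3,b4)" by (cases y) auto
  obtain c1 c2 c3 c4 where z: "z = (c1,c2,c3,c4)" by (cases z) auto
  show ?thesis unfolding x y z mmm apply (simp only: L1 L2 P1) done
qed

lemma mod_mult_both: fixes m :: int shows "(x mod m * (y mod m)) mod m = (x * y) mod m"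
  by (rule mod_mult_eq)

lemma det_mod: fixes m :: int shows "((x1 mod m)*(x4 mod m) - (x2 mod m)*(x3 mod m)) mod m = (x1*x4-x2*x3) mod m"
proof -
  have "((x1 mod m)*(x4 mod m) - (x2 mod m)*(x3 mod m)) mod m
      = (((x1 mod m)*(x4 mod m)) mod m - ((x2 mod m)*(x3 mod m)) mod m) mod m"
    by (rule mod_diff_eq[symmetric])
  also have "\<dots> = ((x1*x4) mod m - (x2*x3) mod m) mod m" by (simp only: mod_mult_both)
  also have "\<dots> = (x1*x4-x2*x3) mod m" by (rule mod_diff_eq)
  finally show ?thesis .
qed

lemma DD: fixes a1 a2 a3 a4 b1 b2 b3 b4 :: int shows "((a1*b1 + a2*b3) * (a3*b2 + a4*b4) - (a1*b2 + a2*b4) * (a3*b1 + a4*b3)) = (a1*a4 - a2*a3) * (b1*b4 - b2*b3)"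
  by (simp add: algebra_simps)

lemma inv_prod_SL2:
  assumes "m > 1" "(a1,a2,a3,a4) \<in> carrier (SL2 m)"
  shows "mat_mult_mod m (a4, (-a2) mod m, (-a3) mod m, a1) (a1,a2,a3,a4) = \<one>\<^bsub>SL2 m\<^esub>"
    and "(a4, (-a2) mod m, (-a3) mod m, a1) \<in> carrier (SL2 m)"
proof -
  have da: "(a1*a4 - a2*a3) mod m = 1 mod m" and r: "a1 \<in> {0..<m}" "a4 \<in> {0..<m}"
    using assms by (auto simp: carrier_SL2)
  have "((-a2) mod m * ((-a3) mod m)) mod m = ((-a2)*(-a3)) mod m"
    by (rule mod_mult_eq)
  then have X: "((-a2) mod m * ((-a3) mod m)) mod m = (a2*a3) mod m" by simp
  have "(a4*a1 - (-a2) mod m * ((-a3) mod m)) mod m = (a4*a1 - ((-a2) mod m * ((-a3) mod m)) mod m) mod m"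
    by (rule mod_diff_right_eq[symmetric])
  also have "\<dots> = (a4*a1 - (a2*a3) mod m) mod m" by (simp only: X)
  also have "\<dots> = (a4*a1 - a2*a3) mod m" by (rule mod_diff_right_eq)
  finally have "(a4*a1 - (-a2) mod m * ((-a3) mod m)) mod m = (a1*a4 - a2*a3) mod m"
    by (simp add: mult.commute)
  then show "(a4, (-a2) mod m, (-a3) mod m, a1) \<in> carrier (SL2 m)"
    using r da assms by (simp add: carrier_SL2)
  have "(a4 * a1 + (- a2) mod m * a3) mod m = (a4 * a1 + (- a2) * a3) mod m" by (rule Lm)
  also have "a4 * a1 + (- a2) * a3 = a1*a4 - a2*a3" by simp
  finally have e1: "(a4 * a1 + (- a2) mod m * a3) mod m = 1 mod m" using da by simp
  have "(a4 * a2 + (- a2) mod m * a4) mod m = (a4 * a2 + (- a2) * a4) mod m" by (rule Lm)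
  then have e2: "(a4 * a2 + (- a2) mod m * a4) mod m = 0" by simp
  have "((- a3) mod m * a1 + a1 * a3) mod m = ((- a3) * a1 + a1 * a3) mod m" by (rule Lm2)
  then have e3: "((- a3) mod m * a1 + a1 * a3) mod m = 0" by simp
  have "((- a3) mod m * a2 + a1 * a4) mod m = ((- a3) * a2 + a1 * a4) mod m" by (rule Lm2)
  also have "(- a3) * a2 + a1 * a4 = a1*a4 - a2*a3" by simp
  finally have e4: "((- a3) mod m * a2 + a1 * a4) mod m = 1 mod m" using da by simp
  show "mat_mult_mod m (a4, (-a2) mod m, (-a3) mod m, a1) (a1,a2,a3,a4) = \<one>\<^bsub>SL2 m\<^esub>"
    using e1 e2 e3 e4 by (simp add: mmm one_SL2)
qed

lemma SL2_group: assumes "m > 1" shows "group (SL2 m)"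
proof (rule groupI)
  fix x y assume x: "x \<in> carrier (SL2 m)" and y: "y \<in> carrier (SL2 m)"
  obtain a1 a2 a3 a4 where xa: "x = (a1,a2,a3,a4)" by (cases x) auto
  obtain b1 b2 b3 b4 where yb: "y = (b1,b2,b3,b4)" by (cases y) auto
  have da: "(a1*a4 - a2*a3) mod m = 1 mod m" and db: "(b1*b4 - b2*b3) mod m = 1 mod m"
    using x y xa yb by (auto simp: carrier_SL2)
  have "((a1*b1 + a2*b3) * (a3*b2 + a4*b4) - (a1*b2 + a2*b4) * (a3*b1 + a4*b3)) mod m
      = ((a1*a4 - a2*a3) * (b1*b4 - b2*b3)) mod m" by (simp only: DD)
  also have "\<dots> = ((a1*a4 - a2*a3) mod m * ((b1*b4 - b2*b3) mod m)) mod m" by (rule mod_mult_eq[symmetric])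
  also have "\<dots> = 1 mod m" using da db mod_mult_eq[of 1 m 1] by simp
  finally have "((a1*b1 + a2*b3) * (a3*b2 + a4*b4) - (a1*b2 + a2*b4) * (a3*b1 + a4*b3)) mod m = 1 mod m" .
  then show "x \<otimes>\<^bsub>SL2 m\<^esub> y \<in> carrier (SL2 m)" using assms
    by (simp add: xa yb mult_SL2 mmm carrier_SL2 det_mod)
next
  show "\<one>\<^bsub>SL2 m\<^esub> \<in> carrier (SL2 m)" using assms by (simp add: one_SL2 carrier_SL2)
next
  fix x y z show "x \<otimes>\<^bsub>SL2 m\<^esub> y \<otimes>\<^bsub>SL2 m\<^esub> z = x \<otimes>\<^bsub>SL2 m\<^esub> (y \<otimes>\<^bsub>SL2 m\<^esub> z)"
    by (simp add: mult_SL2 mmm_assoc)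
next
  fix x assume x: "x \<in> carrier (SL2 m)"
  then show "\<one>\<^bsub>SL2 m\<^esub> \<otimes>\<^bsub>SL2 m\<^esub> x = x" using assms
    by (cases x) (auto simp: one_SL2 mult_SL2 mmm carrier_SL2)
next
  fix x assume x: "x \<in> carrier (SL2 m)"
  obtain a1 a2 a3 a4 where xa: "x = (a1,a2,a3,a4)" by (cases x) auto
  show "\<exists>y\<in>carrier (SL2 m). y \<otimes>\<^bsub>SL2 m\<^esub> x = \<one>\<^bsub>SL2 m\<^esub>"
    using inv_prod_SL2[OF assms, of a1 a2 a3 a4] x xa by (auto simp: mult_SL2)
qed

lemma inv_SL2:
  assumes "m > 1" "(a1,a2,a3,a4) \<in> carrier (SL2 m)"
  shows "inv\<^bsub>SL2 m\<^esub> (a1,a2,a3,a4) = (a4, (-a2) mod m, (-a3) mod m, a1)"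
proof -
  interpret group "SL2 m" by (rule SL2_group[OF assms(1)])
  show ?thesis
    by (rule inv_equality) (use inv_prod_SL2[OF assms] assms(2) in \<open>simp_all add: mult_SL2\<close>)
qed

lemma reduce_hom:
  assumes "n > 1" "m > 1" "n dvd m"
  shows "group_hom (SL2 m) (SL2 n) (reduce_mod n)"
proof -
  have "reduce_mod n \<in> hom (SL2 m) (SL2 n)"
  proof (rule homI)
    fix x assume x: "x \<in> carrier (SL2 m)"
    obtain a1 a2 a3 a4 where xa: "x = (a1,a2,a3,a4)" by (cases x) auto
    have da: "(a1*a4 - a2*a3) mod m = 1 mod m" using x xa by (auto simp: carrier_SL2)
    have "(a1*a4 - a2*a3) mod n = (a1*a4 - a2*a3) mod m mod n" using assms(3) by (simp add: mod_mod_cancel)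
    also have "\<dots> = 1 mod n" using da assms(3) by (simp add: mod_mod_cancel)
    finally show "reduce_mod n x \<in> carrier (SL2 n)" using assms
      by (simp add: xa reduce_mod_def carrier_SL2 det_mod)
  next
    fix x y assume x: "x \<in> carrier (SL2 m)" and y: "y \<in> carrier (SL2 m)"
    obtain a1 a2 a3 a4 where xa: "x = (a1,a2,a3,a4)" by (cases x) auto
    obtain b1 b2 b3 b4 where yb: "y = (b1,b2,b3,b4)" by (cases y) auto
    have e: "(u mod n * (v mod n) + s mod n * (t mod n)) mod n = (u*v + s*t) mod n" for u v s t :: int
      by (simp only: L1 L2)
    show "reduce_mod n (x \<otimes>\<^bsub>SL2 m\<^esub> y) = reduce_mod n x \<otimes>\<^bsub>SL2 n\<^esub> reduce_mod n y"
      by (simp only: xa yb mult_SL2 mmm reduce_mod_def e mod_mod_cancel[OF assms(3)] prod.case)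
  qed
  then show ?thesis using SL2_group assms
    by (simp add: group_hom_def group_hom_axioms_def)
qed

lemma quot_iso:
  fixes G (structure) and Z H
  assumes G: "group G" and Z: "Z \<lhd> G" and H: "subgroup H G" and HZ: "H \<inter> Z \<subseteq> {\<one>\<^bsub>G\<^esub>}"
  shows "(G Mod Z)\<lparr>carrier := (\<lambda>g. Z #>\<^bsub>G\<^esub> g) ` H\<rparr> \<cong> G\<lparr>carrier := H\<rparr>"
proof -
  interpret group G by fact
  interpret N: normal Z G by fact
  have GH: "group (G\<lparr>carrier := H\<rparr>)" by (rule subgroup.subgroup_is_group[OF H G])
  have hom: "(\<lambda>g. Z #> g) \<in> hom (G\<lparr>carrier := H\<rparr>) ((G Mod Z)\<lparr>carrier := (\<lambda>g. Z #> g) ` H\<rparr>)"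
  proof -
    have "\<forall>x\<in>H. \<forall>y\<in>H. Z #> (x \<otimes> y) = (Z #> x) <#> (Z #> y)"
      using N.rcos_sum H subgroup.mem_carrier by metis
    then show ?thesis by (auto simp: hom_def FactGroup_def)
  qed
  have inj: "inj_on (\<lambda>g. Z #> g) H"
  proof (rule inj_onI)
    fix x y assume x: "x \<in> H" and y: "y \<in> H" and e: "Z #> x = Z #> y"
    have xc: "x \<in> carrier G" and yc: "y \<in> carrier G" using x y H by (auto intro: subgroup.mem_carrier)
    have "x \<in> Z #> x" by (rule rcos_self[OF xc N.subgroup_axioms])
    then have "x \<in> Z #> y" using e by simp
    then obtain z where z: "z \<in> Z" and xz: "x = z \<otimes> y" unfolding r_coset_def by blast
    have zc: "z \<in> carrier G" using z N.subset by blast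
    have "x \<otimes> inv y = z" unfolding xz using zc yc by (simp add: m_assoc)
    moreover have "x \<otimes> inv y \<in> H" by (rule subgroup.m_closed[OF H x subgroup.m_inv_closed[OF H y]])
    ultimately have "z \<in> H" by simp
    then have "z = \<one>" using z HZ by auto
    then show "x = y" using xz yc by (simp only: l_one)
  qed
  have "(\<lambda>g. Z #> g) \<in> iso (G\<lparr>carrier := H\<rparr>) ((G Mod Z)\<lparr>carrier := (\<lambda>g. Z #> g) ` H\<rparr>)"
    using hom inj by (simp add: iso_def bij_betw_def)
  then have "G\<lparr>carrier := H\<rparr> \<cong> (G Mod Z)\<lparr>carrier := (\<lambda>g. Z #> g) ` H\<rparr>"
    unfolding is_iso_def by blast
  then show ?thesis by (rule group.iso_sym[OF GH])
qed


lemma negm: "((m - 1) * a) mod m = (-a) mod (m::int)"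
proof -
  have "(m - 1) * a = -a + a * m" by (simp add: algebra_simps)
  then show ?thesis by (simp only: mod_mult_self1)
qed

lemma negm2: "(a * (m - 1)) mod m = (-a) mod (m::int)"
  using negm[of m a] by (simp add: mult.commute)

lemma centre_eq: "m > 1 \<Longrightarrow> centre_pm m = {(1,0,0,1), (m-1,0,0,m-1)}"
  by (simp add: centre_pm_def zmod_minus1)

lemma negI_mult: "mat_mult_mod m (m-1,0,0,m-1) (a1,a2,a3,a4) = ((-a1) mod m, (-a2) mod m, (-a3) mod m, (-a4) mod m)"
  by (simp add: mmm negm)
lemma mult_negI: "mat_mult_mod m (a1,a2,a3,a4) (m-1,0,0,m-1) = ((-a1) mod m, (-a2) mod m, (-a3) mod m, (-a4) mod m)"
  by (simp add: mmm negm2)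

lemma neg_neg1: "m > 1 \<Longrightarrow> (-(m-1)) mod m = (1::int)"
proof -
  assume "m > 1"
  have "-(m-1) = 1 + (-1) * m" by simp
  then have "(-(m-1)) mod m = 1 mod m" by (simp only: mod_mult_self1)
  then show ?thesis using \<open>m > 1\<close> by simp
qed

lemma negI_carrier: assumes "m > 1" shows "(m-1,0,0,m-1) \<in> carrier (SL2 m)"
proof -
  have "((m-1)*(m-1) - 0*0) mod m = (-(m-1)) mod m" using negm[of m "m-1"] by simp
  then show ?thesis using assms neg_neg1[OF assms] by (simp add: carrier_SL2)
qed

lemma I_carrier: "m > 1 \<Longrightarrow> (1,0,0,1) \<in> carrier (SL2 m)"
  by (simp add: carrier_SL2)

lemma one_SL2': "m > 1 \<Longrightarrow> \<one>\<^bsub>SL2 m\<^esub> = (1,0,0,1)"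
  by (simp add: one_SL2)

lemma I_mult: assumes "(a1,a2,a3,a4) \<in> carrier (SL2 m)"
  shows "mat_mult_mod m (1,0,0,1) (a1,a2,a3,a4) = (a1,a2,a3,a4)"
    and "mat_mult_mod m (a1,a2,a3,a4) (1,0,0,1) = (a1,a2,a3,a4)"
  using assms by (auto simp: mmm carrier_SL2)

lemma Z_normal: assumes "m > 1" shows "centre_pm m \<lhd> SL2 m"
proof -
  interpret group "SL2 m" using SL2_group assms by blast
  have Zeq: "centre_pm m = {(1,0,0,1), (m-1,0,0,m-1)}" by (rule centre_eq[OF assms])
  have c: "centre_pm m \<subseteq> carrier (SL2 m)" unfolding Zeq using negI_carrier[OF assms] I_carrier[OF assms]
    by simp
  have n1: "(-(m-1)) mod m = 1" by (rule neg_neg1[OF assms])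
  have n2: "(-1) mod m = m - 1" using assms by (simp add: zmod_minus1)
  have sub: "subgroup (centre_pm m) (SL2 m)"
  proof (rule subgroupI)
    show "centre_pm m \<subseteq> carrier (SL2 m)" by (rule c)
    show "centre_pm m \<noteq> {}" by (simp add: Zeq)
  next
    fix a assume "a \<in> centre_pm m"
    then have "a = (1,0,0,1) \<or> a = (m-1,0,0,m-1)" by (simp add: Zeq)
    then show "inv\<^bsub>SL2 m\<^esub> a \<in> centre_pm m"
    proof
      assume "a = (1,0,0,1)"
      then show ?thesis using inv_SL2[OF assms I_carrier[OF assms]] by (simp add: Zeq)
    next
      assume "a = (m-1,0,0,m-1)"
      then show ?thesis using inv_SL2[OF assms negI_carrier[OF assms]] by (simp add: Zeq)
    qed
  next
    fix a b assume a: "a \<in> centre_pm m" and b: "b \<in> centre_pm m"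
    have bc: "b \<in> carrier (SL2 m)" using b c by blast
    from a have "a = (1,0,0,1) \<or> a = (m-1,0,0,m-1)" by (simp add: Zeq)
    then show "a \<otimes>\<^bsub>SL2 m\<^esub> b \<in> centre_pm m"
    proof
      assume "a = (1,0,0,1)"
      then show ?thesis using b bc by (cases b) (simp add: mult_SL2 I_mult)
    next
      assume an: "a = (m-1,0,0,m-1)"
      from b have "b = (1,0,0,1) \<or> b = (m-1,0,0,m-1)" by (simp add: Zeq)
      then show ?thesis
      proof
        assume "b = (1,0,0,1)"
        then show ?thesis using an n2 by (simp add: mult_SL2 negI_mult Zeq)
      next
        assume "b = (m-1,0,0,m-1)"
        then show ?thesis using an n1 by (simp add: mult_SL2 negI_mult Zeq)
      qed
    qed
  qed
  have comm: "x \<otimes>\<^bsub>SL2 m\<^esub> h = h \<otimes>\<^bsub>SL2 m\<^esub> x" if x: "x \<in> carrier (SL2 m)" and h: "h \<in> centre_pm m" for x h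
  proof -
    obtain a1 a2 a3 a4 where xa: "x = (a1,a2,a3,a4)" by (cases x) auto
    have xc: "(a1,a2,a3,a4) \<in> carrier (SL2 m)" using x xa by simp
    from h have "h = (1,0,0,1) \<or> h = (m-1,0,0,m-1)" by (simp add: Zeq)
    then show ?thesis
    proof
      assume "h = (1,0,0,1)"
      then show ?thesis using I_mult[OF xc] by (simp add: xa mult_SL2)
    next
      assume "h = (m-1,0,0,m-1)"
      then show ?thesis by (simp add: xa mult_SL2 negI_mult mult_negI)
    qed
  qed
  show ?thesis unfolding normal_inv_iff
  proof (intro conjI ballI)
    show "subgroup (centre_pm m) (SL2 m)" by (rule sub)
    fix x h assume x: "x \<in> carrier (SL2 m)" and h: "h \<in> centre_pm m"
    have hc: "h \<in> carrier (SL2 m)" using h c by blast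
    have "x \<otimes>\<^bsub>SL2 m\<^esub> h \<otimes>\<^bsub>SL2 m\<^esub> inv\<^bsub>SL2 m\<^esub> x = h \<otimes>\<^bsub>SL2 m\<^esub> (x \<otimes>\<^bsub>SL2 m\<^esub> inv\<^bsub>SL2 m\<^esub> x)"
      using comm[OF x h] x hc by (simp add: m_assoc)
    also have "\<dots> = h" using x hc by simp
    finally show "x \<otimes>\<^bsub>SL2 m\<^esub> h \<otimes>\<^bsub>SL2 m\<^esub> inv\<^bsub>SL2 m\<^esub> x \<in> centre_pm m" using h by simp
  qed
qed



lemma Tc:
  fixes q p x u :: int
  assumes "q > 0" "x mod (q*p) = (q*u) mod (q*p)"
  shows "(x div q) mod p = u mod p"
proof -
  have "q*p dvd x - q*u" using assms(2) mod_eq_dvd_iff by blast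
  then obtain t where "x - q*u = q*p*t" by (auto elim!: dvdE)
  then have "x = q*(u + p*t)" by (simp add: algebra_simps)
  then have "x div q = u + p*t" using assms(1) by simp
  then show ?thesis by simp
qed

lemma ent_cong:
  fixes r m q XX cc u w :: int
  assumes "r dvd m" "r dvd q*q" "XX = cc + q*u + q*q*w"
  shows "(XX mod m - cc) mod r = (q*u) mod r"
proof -
  have 1: "(XX mod m - cc) mod r = (XX mod m mod r - cc) mod r"
    by (simp add: mod_diff_left_eq)
  have 2: "XX mod m mod r = XX mod r" using assms(1) by (simp add: mod_mod_cancel)
  have 3: "(XX mod r - cc) mod r = (XX - cc) mod r" by (simp add: mod_diff_left_eq)
  obtain s where s: "q*q = r*s" using assms(2) by (auto elim!: dvdE)
  have 4: "XX - cc = q*u + r*(s*w)" using s assms(3) by (simp add: algebra_simps)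
  have 5: "(q*u + r*(s*w)) mod r = (q*u) mod r" by simp
  show ?thesis using 1 2 3 4 5 by simp
qed

lemma d_lemma:
  fixes a1 a2 a3 a4 m n :: int
  assumes "(a1*a4 - a2*a3) mod m = 1 mod m" "n dvd m" "n > 1" "a1 mod n = 1" "a2 mod n = 0"
  shows "a4 mod n = 1"
proof -
  have t: "a1 = 1 + n*(a1 div n)" using mult_div_mod_eq[of n a1] assms(4) by simp
  have u: "a2 = n*(a2 div n)" using mult_div_mod_eq[of n a2] assms(5) by simp
  have "(a1*a4 - a2*a3) mod n = (a1*a4 - a2*a3) mod m mod n" using assms(2) by (simp add: mod_mod_cancel)
  also have "\<dots> = 1 mod n" using assms(1,2) by (simp add: mod_mod_cancel)
  finally have A: "(a1*a4 - a2*a3) mod n = 1 mod n" .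
  have "a1*a4 - a2*a3 = a4 + n*((a1 div n)*a4 - (a2 div n)*a3)"
    by (subst t, subst u) (simp add: algebra_simps)
  then have "(a1*a4 - a2*a3) mod n = a4 mod n" by simp
  then show ?thesis using A assms(3) by simp
qed

locale PK =
  fixes p :: int and k :: nat
  assumes prime: "Factorial_Ring.prime p" and oddp: "odd p" and k2: "k \<ge> 2"
begin

lemma p3: "p \<ge> 3"
proof -
  have "p \<ge> 2" using prime by (simp add: prime_ge_2_int)
  moreover have "p \<noteq> 2" using oddp by auto
  ultimately show ?thesis by simp
qed

lemma p_pos: "p > 0" using p3 by simp

lemma pow_gt1: "l \<ge> 1 \<Longrightarrow> p^l > 1"
  using p3 by (simp add: one_less_power)

lemma pow_pos: "p^l > 0" using p_pos by simp

lemma m_gt1: "p^k > 1" using pow_gt1 k2 by simp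

lemma pow_dvd: "l \<le> n \<Longrightarrow> p^l dvd p^n" by (simp add: le_imp_power_dvd)

definition K :: "nat \<Rightarrow> mat2 set" where
  "K l = kernel (SL2 (p^k)) (SL2 (p^l)) (reduce_mod (p^l))"

lemma K_mem:
  assumes "1 \<le> l"
  shows "(a1,a2,a3,a4) \<in> K l \<longleftrightarrow> (a1,a2,a3,a4) \<in> carrier (SL2 (p^k)) \<and>
      a1 mod p^l = 1 \<and> a2 mod p^l = 0 \<and> a3 mod p^l = 0 \<and> a4 mod p^l = 1"
  using pow_gt1[OF assms(1)] by (auto simp: K_def kernel_def reduce_mod_def one_SL2)

lemma K_normal: "1 \<le> l \<Longrightarrow> l \<le> k \<Longrightarrow> K l \<lhd> SL2 (p^k)"
  unfolding K_def
  by (rule group_hom.normal_kernel[OF reduce_hom[OF pow_gt1 m_gt1 pow_dvd]]) auto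

lemma K_sub: "1 \<le> l \<Longrightarrow> l \<le> k \<Longrightarrow> subgroup (K l) (SL2 (p^k))"
  using K_normal normal_def by blast

lemma K_carrier: "K l \<subseteq> carrier (SL2 (p^k))"
  by (auto simp: K_def kernel_def)

lemma K_k: "K k = {\<one>\<^bsub>SL2 (p^k)\<^esub>}"
proof -
  have "x \<in> K k \<longleftrightarrow> x = (1,0,0,1)" for x
  proof -
    obtain a1 a2 a3 a4 where x: "x = (a1,a2,a3,a4)" by (cases x) auto
    have k1: "1 \<le> k" using k2 by simp
    show ?thesis
    proof
      assume "x \<in> K k"
      then have c: "(a1,a2,a3,a4) \<in> carrier (SL2 (p^k))" and
        e: "a1 mod p^k = 1" "a2 mod p^k = 0" "a3 mod p^k = 0" "a4 mod p^k = 1"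
        using K_mem[OF k1, of a1 a2 a3 a4] x by auto
      from c have "a1 \<in> {0..<p^k}" "a2 \<in> {0..<p^k}" "a3 \<in> {0..<p^k}" "a4 \<in> {0..<p^k}"
        by (simp_all add: carrier_SL2)
      then have "a1 mod p^k = a1" "a2 mod p^k = a2" "a3 mod p^k = a3" "a4 mod p^k = a4"
        by simp_all
      then show "x = (1,0,0,1)" using e x by simp
    next
      assume "x = (1,0,0,1)"
      then show "x \<in> K k" using K_mem[OF k1, of 1 0 0 1] I_carrier[OF m_gt1] m_gt1 by simp
    qed
  qed
  then show ?thesis using m_gt1 by (auto simp: one_SL2)
qed

end


context PK begin

abbreviation "Hc \<equiv> cyc (nat p) \<times>\<times> cyc (nat p) \<times>\<times> cyc (nat p)"

lemma natp: "int (nat p) = p" using p_pos by simp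

lemma carrier_Hc: "carrier Hc = {0..<p} \<times> {0..<p} \<times> {0..<p}"
  using p_pos by (simp add: DirProd_def carrier_integer_mod_group natp)
lemma carrier_cyc: "carrier (cyc (nat p)) = {0..<p}"
  using p_pos by (simp add: carrier_integer_mod_group natp)
lemma one_Hc: "\<one>\<^bsub>Hc\<^esub> = (0,0,0)"
  by (simp add: DirProd_def)
lemma mult_Hc: "(x1,x2,x3) \<otimes>\<^bsub>Hc\<^esub> (y1,y2,y3) = ((x1+y1) mod p, (x2+y2) mod p, (x3+y3) mod p)"
  using p_pos by (simp add: DirProd_def natp)
lemma group_Hc: "group Hc"
  by (simp add: DirProd_group)

definition fK :: "nat \<Rightarrow> mat2 \<Rightarrow> int \<times> int \<times> int" where
  "fK l x = (case x of (a1,a2,a3,a4) \<Rightarrow> (((a1-1) div p^l) mod p, (a2 div p^l) mod p, (a3 div p^l) mod p))"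

lemma f_entry:
  assumes "1 \<le> l" "l < k" "XX = cc + p^l*u + p^l*p^l*w"
  shows "((XX mod p^k - cc) div p^l) mod p = u mod p"
proof (rule Tc)
  show "p^l > 0" by (rule pow_pos)
  have "p^l*p dvd p^k" using assms(2) pow_dvd[of "Suc l" k] by (simp add: mult.commute)
  moreover have "p^l*p dvd p^l*p^l" using assms(1) pow_dvd[of 1 l] by simp
  ultimately show "(XX mod p^k - cc) mod (p^l*p) = (p^l*u) mod (p^l*p)"
    using ent_cong[of "p^l*p" "p^k" "p^l" XX cc u w] assms(3) by simp
qed

lemma K_elem:
  assumes "1 \<le> l" "(a1,a2,a3,a4) \<in> K l"
  shows "a1 = 1 + p^l*((a1-1) div p^l)" "a2 = p^l*(a2 div p^l)" "a3 = p^l*(a3 div p^l)"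
    "a4 = 1 + p^l*((a4-1) div p^l)"
proof -
  have e: "a1 mod p^l = 1" "a2 mod p^l = 0" "a3 mod p^l = 0" "a4 mod p^l = 1"
    using K_mem[OF assms(1)] assms(2) by auto
  have g: "x mod p^l = c \<Longrightarrow> x = c + p^l*((x - c) div p^l)" for x c
  proof -
    assume "x mod p^l = c"
    then have "(x - c) mod p^l = 0" by (simp add: mod_diff_left_eq[symmetric])
    then have "x - c = p^l*((x - c) div p^l)" using mult_div_mod_eq[of "p^l" "x-c"] by simp
    then show ?thesis by simp
  qed
  show "a1 = 1 + p^l*((a1-1) div p^l)" using g[OF e(1)] .
  show "a2 = p^l*(a2 div p^l)" using g[OF e(2)] by simp
  show "a3 = p^l*(a3 div p^l)" using g[OF e(3)] by simp
  show "a4 = 1 + p^l*((a4-1) div p^l)" using g[OF e(4)] .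
qed

lemma fK_hom:
  assumes l: "1 \<le> l" "l < k" and x: "x \<in> K l" and y: "y \<in> K l"
  shows "fK l (mat_mult_mod (p^k) x y) = fK l x \<otimes>\<^bsub>Hc\<^esub> fK l y"
proof -
  obtain a1 a2 a3 a4 where xa: "x = (a1,a2,a3,a4)" by (cases x) auto
  obtain b1 b2 b3 b4 where yb: "y = (b1,b2,b3,b4)" by (cases y) auto
  define q where "q = p^l"
  define \<alpha>1 where "\<alpha>1 = (a1-1) div q"
  define \<alpha>2 where "\<alpha>2 = a2 div q"
  define \<alpha>3 where "\<alpha>3 = a3 div q"
  define \<alpha>4 where "\<alpha>4 = (a4-1) div q"
  define \<beta>1 where "\<beta>1 = (b1-1) div q"
  define \<beta>2 where "\<beta>2 = b2 div q"
  define \<beta>3 where "\<beta>3 = b3 div q"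
  define \<beta>4 where "\<beta>4 = (b4-1) div q"
  have A: "a1 = 1 + q*\<alpha>1" "a2 = q*\<alpha>2" "a3 = q*\<alpha>3" "a4 = 1 + q*\<alpha>4"
    using K_elem[OF l(1)] x xa unfolding q_def \<alpha>1_def \<alpha>2_def \<alpha>3_def \<alpha>4_def by auto
  have B: "b1 = 1 + q*\<beta>1" "b2 = q*\<beta>2" "b3 = q*\<beta>3" "b4 = 1 + q*\<beta>4"
    using K_elem[OF l(1)] y yb unfolding q_def \<beta>1_def \<beta>2_def \<beta>3_def \<beta>4_def by auto
  have E1: "a1*b1 + a2*b3 = 1 + q*(\<alpha>1+\<beta>1) + q*q*(\<alpha>1*\<beta>1+\<alpha>2*\<beta>3)"
    unfolding A B by (simp add: algebra_simps)
  have E2: "a1*b2 + a2*b4 = 0 + q*(\<alpha>2+\<beta>2) + q*q*(\<alpha>1*\<beta>2+\<alpha>2*\<beta>4)"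
    unfolding A B by (simp add: algebra_simps)
  have E3: "a3*b1 + a4*b3 = 0 + q*(\<alpha>3+\<beta>3) + q*q*(\<alpha>3*\<beta>1+\<alpha>4*\<beta>3)"
    unfolding A B by (simp add: algebra_simps)
  have F1: "(((a1*b1 + a2*b3) mod p^k - 1) div p^l) mod p = (\<alpha>1+\<beta>1) mod p"
    using f_entry[OF l E1[unfolded q_def]] .
  have F2: "(((a1*b2 + a2*b4) mod p^k - 0) div p^l) mod p = (\<alpha>2+\<beta>2) mod p"
    using f_entry[OF l E2[unfolded q_def]] .
  have F3: "(((a3*b1 + a4*b3) mod p^k - 0) div p^l) mod p = (\<alpha>3+\<beta>3) mod p"
    using f_entry[OF l E3[unfolded q_def]] .
  have fx: "fK l x = (\<alpha>1 mod p, \<alpha>2 mod p, \<alpha>3 mod p)"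
    unfolding fK_def xa q_def \<alpha>1_def \<alpha>2_def \<alpha>3_def by simp
  have fy: "fK l y = (\<beta>1 mod p, \<beta>2 mod p, \<beta>3 mod p)"
    unfolding fK_def yb q_def \<beta>1_def \<beta>2_def \<beta>3_def by simp
  have "fK l (mat_mult_mod (p^k) x y) = ((\<alpha>1+\<beta>1) mod p, (\<alpha>2+\<beta>2) mod p, (\<alpha>3+\<beta>3) mod p)"
    using F1 F2 F3 unfolding fK_def xa yb mmm by simp
  also have "\<dots> = fK l x \<otimes>\<^bsub>Hc\<^esub> fK l y"
    unfolding fx fy mult_Hc by (simp add: mod_add_eq)
  finally show ?thesis .
qed


lemma K_mono: assumes "1 \<le> l" "x \<in> K (Suc l)" shows "x \<in> K l"
proof -
  obtain a1 a2 a3 a4 where xa: "x = (a1,a2,a3,a4)" by (cases x) auto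
  have e: "(a1,a2,a3,a4) \<in> carrier (SL2 (p^k))" "a1 mod p^Suc l = 1" "a2 mod p^Suc l = 0"
    "a3 mod p^Suc l = 0" "a4 mod p^Suc l = 1"
    using K_mem[of "Suc l"] assms xa by auto
  have d: "p^l dvd p^Suc l" by (rule pow_dvd) simp
  have g: "a mod p^Suc l = c \<Longrightarrow> a mod p^l = c mod p^l" for a c
    by (metis d mod_mod_cancel)
  show ?thesis using K_mem[OF assms(1)] e g[OF e(2)] g[OF e(3)] g[OF e(4)] g[OF e(5)] pow_gt1[OF assms(1)] xa
    by simp
qed

lemma fK_kernel:
  assumes l: "1 \<le> l" "l < k"
  shows "kernel ((SL2 (p^k))\<lparr>carrier := K l\<rparr>) Hc (fK l) = K (Suc l)"
proof -
  have "x \<in> K l \<and> fK l x = (0,0,0) \<longleftrightarrow> x \<in> K (Suc l)" for x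
  proof -
    obtain a1 a2 a3 a4 where xa: "x = (a1,a2,a3,a4)" by (cases x) auto
    define q where "q = p^l"
    have q1: "q > 1" unfolding q_def using pow_gt1[OF l(1)] .
    have r: "p^Suc l = q*p" unfolding q_def by (simp add: mult.commute)
    have "q * 1 < q * p" using q1 p3 by (intro mult_strict_left_mono) auto
    then have r1: "q*p > 1" using q1 by linarith
    have "p^Suc l dvd p^k" using l(2) by (intro pow_dvd) simp
    then have rk: "q*p dvd p^k" unfolding r .
    show ?thesis
    proof
      assume h: "x \<in> K l \<and> fK l x = (0,0,0)"
      have xK: "(a1,a2,a3,a4) \<in> K l" using h xa by simp
      have c: "(a1,a2,a3,a4) \<in> carrier (SL2 (p^k))" using xK K_carrier by blast
      have A: "a1 = 1 + q*((a1-1) div q)" "a2 = q*(a2 div q)" "a3 = q*(a3 div q)"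
        using K_elem[OF l(1) xK] unfolding q_def by auto
      have z: "((a1-1) div q) mod p = 0" "(a2 div q) mod p = 0" "(a3 div q) mod p = 0"
        using h xa unfolding fK_def q_def by auto
      have m0: "(q*t) mod (q*p) = 0" if "t mod p = 0" for t
        using that by (simp add: mod_mult_mult1)
      have e1: "a1 mod (q*p) = 1"
      proof -
        have "(a1 - 1) mod (q*p) = 0" using A(1) m0[OF z(1)] by (metis add_diff_cancel_left')
        then have "a1 mod (q*p) = 1 mod (q*p)" by (simp add: mod_eq_dvd_iff dvd_eq_mod_eq_0)
        then show ?thesis using r1 by simp
      qed
      have e2: "a2 mod (q*p) = 0" using A(2) m0[OF z(2)] by simp
      have e3: "a3 mod (q*p) = 0" using A(3) m0[OF z(3)] by simp
      have det: "(a1*a4 - a2*a3) mod p^k = 1 mod p^k" using c by (simp add: carrier_SL2)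
      have e4: "a4 mod (q*p) = 1" by (rule d_lemma[OF det rk r1 e1 e2])
      show "x \<in> K (Suc l)" using K_mem[of "Suc l" a1 a2 a3 a4, unfolded r] c e1 e2 e3 e4 xa by simp
    next
      assume h: "x \<in> K (Suc l)"
      have xK: "x \<in> K l" by (rule K_mono[OF l(1) h])
      have e: "a1 mod (q*p) = 1" "a2 mod (q*p) = 0" "a3 mod (q*p) = 0"
        using K_mem[of "Suc l" a1 a2 a3 a4, unfolded r] h xa by auto
      have g: "a mod (q*p) = 0 \<Longrightarrow> (a div q) mod p = 0" for a
      proof -
        assume "a mod (q*p) = 0"
        then obtain t where "a = q*p*t" by (auto elim!: dvdE)
        then show ?thesis using q1 by simp
      qed
      have "(a1 - 1) mod (q*p) = 0" using e(1) by (simp add: mod_diff_left_eq[symmetric])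
      then have "fK l x = (0,0,0)" using g e xa unfolding fK_def q_def by simp
      then show "x \<in> K l \<and> fK l x = (0,0,0)" using xK by simp
    qed
  qed
  then show ?thesis by (auto simp: kernel_def one_Hc)
qed

lemma fK_surj:
  assumes l: "1 \<le> l" "l < k"
  shows "fK l ` K l = carrier Hc"
proof
  show "fK l ` K l \<subseteq> carrier Hc"
    using p_pos by (auto simp: fK_def carrier_Hc carrier_cyc split: prod.splits)
next
  show "carrier Hc \<subseteq> fK l ` K l"
  proof
    fix z assume "z \<in> carrier Hc"
    then obtain x1 x2 x3 where z: "z = (x1,x2,x3)" and xr: "x1 \<in> {0..<p}" "x2 \<in> {0..<p}" "x3 \<in> {0..<p}"
      by (auto simp: carrier_Hc carrier_cyc)
    define q where "q = p^l"
    define m where "m = p^k"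
    have q1: "q > 1" unfolding q_def using pow_gt1[OF l(1)] .
    have m1: "m > 1" unfolding m_def by (rule m_gt1)
    have qm: "q dvd m" unfolding q_def m_def using l by (simp add: pow_dvd)
    have pq: "p dvd q" unfolding q_def using l(1) pow_dvd[of 1 l] by simp
    have np: "\<not> p dvd (1 + q*x1)"
    proof
      assume "p dvd (1 + q*x1)"
      moreover have "p dvd q*x1" using pq by simp
      ultimately have "p dvd 1" by (metis dvd_add_left_iff)
      then show False using p3 zdvd_imp_le[of p 1] by simp
    qed
    have "coprime p (1 + q*x1)" by (rule prime_imp_coprime[OF prime np])
    then have "coprime (1 + q*x1) m" unfolding m_def by (simp add: coprime_commute)
    then obtain s where s: "[(1 + q*x1) * s = 1] (mod m)" using cong_solve_coprime_int by blast
    then have s': "((1 + q*x1) * s) mod m = 1" using m1 by (simp add: cong_def)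
    define W where "W = 1 + q*q*x2*x3"
    define d where "d = (s*W) mod m"
    define M where "M = ((1 + q*x1) mod m, (q*x2) mod m, (q*x3) mod m, d)"
    have det: "((1 + q*x1) mod m * d - (q*x2) mod m * ((q*x3) mod m)) mod m = 1"
    proof -
      have "((1 + q*x1) mod m * d - (q*x2) mod m * ((q*x3) mod m)) mod m
          = ((1 + q*x1) * (s*W) - (q*x2) * (q*x3)) mod m"
        unfolding d_def by (rule det_mod)
      also have "(1 + q*x1) * (s*W) = ((1 + q*x1) * s) * W" by (simp add: algebra_simps)
      also have "(((1 + q*x1) * s) * W - (q*x2) * (q*x3)) mod m
          = ((((1 + q*x1) * s) * W) mod m - (q*x2) * (q*x3)) mod m"
        by (simp add: mod_diff_left_eq)
      also have "(((1 + q*x1) * s) * W) mod m = ((((1 + q*x1) * s) mod m) * W) mod m"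
        by (simp add: mod_mult_left_eq)
      also have "\<dots> = W mod m" using s' by simp
      also have "(W mod m - (q*x2) * (q*x3)) mod m = (W - (q*x2) * (q*x3)) mod m"
        by (simp add: mod_diff_left_eq)
      also have "W - (q*x2) * (q*x3) = 1" unfolding W_def by (simp add: algebra_simps)
      finally show ?thesis using m1 by simp
    qed
    have Mc: "M \<in> carrier (SL2 (p^k))"
      using det m1 unfolding M_def m_def d_def by (simp add: carrier_SL2)
    have a1: "((1 + q*x1) mod m) mod q = 1"
      using qm q1 by (simp add: mod_mod_cancel)
    have a2: "((q*x2) mod m) mod q = 0" using qm by (simp add: mod_mod_cancel)
    have a3: "((q*x3) mod m) mod q = 0" using qm by (simp add: mod_mod_cancel)
    have a4: "d mod q = 1"
      using d_lemma[of "(1 + q*x1) mod m" d "(q*x2) mod m" "(q*x3) mod m" m q] det qm q1 a1 a2 m1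
      by simp
    have MK: "M \<in> K l"
      using K_mem[OF l(1)] Mc a1 a2 a3 a4 unfolding M_def q_def m_def by simp
    have f1: "((((1 + q*x1) mod m - 1) div q) mod p) = x1 mod p"
      using f_entry[OF l, of "1 + q*x1" 1 x1 0] unfolding q_def m_def by simp
    have f2: "((((q*x2) mod m - 0) div q) mod p) = x2 mod p"
      using f_entry[OF l, of "q*x2" 0 x2 0] unfolding q_def m_def by simp
    have f3: "((((q*x3) mod m - 0) div q) mod p) = x3 mod p"
      using f_entry[OF l, of "q*x3" 0 x3 0] unfolding q_def m_def by simp
    have "fK l M = (x1,x2,x3)"
      using f1 f2 f3 xr unfolding fK_def M_def q_def by simp
    then show "z \<in> fK l ` K l" using MK z by force
  qed
qed

lemma quotient_step:
  assumes l: "1 \<le> l" "l < k"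
  shows "(SL2 (p^k))\<lparr>carrier := K l\<rparr> Mod K (Suc l) \<cong> Hc"
proof -
  have G: "group ((SL2 (p^k))\<lparr>carrier := K l\<rparr>)"
    using K_sub[OF l(1)] l(2) SL2_group[OF m_gt1] subgroup.subgroup_is_group by simp
  have hom: "fK l \<in> hom ((SL2 (p^k))\<lparr>carrier := K l\<rparr>) Hc"
  proof (rule homI)
    fix x assume "x \<in> carrier ((SL2 (p^k))\<lparr>carrier := K l\<rparr>)"
    then show "fK l x \<in> carrier Hc" using fK_surj[OF l] by auto
  next
    fix x y assume "x \<in> carrier ((SL2 (p^k))\<lparr>carrier := K l\<rparr>)" "y \<in> carrier ((SL2 (p^k))\<lparr>carrier := K l\<rparr>)"
    then show "fK l (x \<otimes>\<^bsub>(SL2 (p^k))\<lparr>carrier := K l\<rparr>\<^esub> y) = fK l x \<otimes>\<^bsub>Hc\<^esub> fK l y"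
      using fK_hom[OF l] by (simp add: mult_SL2)
  qed
  have gh: "group_hom ((SL2 (p^k))\<lparr>carrier := K l\<rparr>) Hc (fK l)"
    using G group_Hc hom by (simp add: group_hom_def group_hom_axioms_def)
  have "(SL2 (p^k))\<lparr>carrier := K l\<rparr> Mod kernel ((SL2 (p^k))\<lparr>carrier := K l\<rparr>) Hc (fK l) \<cong> Hc"
    by (rule group_hom.FactGroup_iso[OF gh]) (simp add: fK_surj[OF l])
  then show ?thesis using fK_kernel[OF l] by simp
qed

end


lemma geo:
  fixes a p :: int
  assumes "[a = 1] (mod p)"
  shows "\<exists>s. a^n - 1 = (a - 1)*s \<and> [s = int n] (mod p)"
proof (induction n)
  case 0
  show ?case by (rule exI[of _ 0]) simp
next
  case (Suc n)
  then obtain s where s: "a^n - 1 = (a - 1)*s" "[s = int n] (mod p)" by blast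
  have "a^Suc n - 1 = (a - 1)*(a*s + 1)"
  proof -
    have "a^Suc n - 1 = a*(a^n - 1) + (a - 1)" by (simp add: algebra_simps)
    also have "\<dots> = a*((a - 1)*s) + (a - 1)" using s(1) by simp
    also have "\<dots> = (a - 1)*(a*s + 1)" by (simp add: algebra_simps)
    finally show ?thesis .
  qed
  moreover have "[a*s + 1 = int (Suc n)] (mod p)"
  proof -
    have "[a*s = 1 * int n] (mod p)" by (rule cong_mult[OF assms s(2)])
    then have "[a*s + 1 = int n + 1] (mod p)" by (simp add: cong_add)
    then show ?thesis by (simp add: add.commute)
  qed
  ultimately show ?case by blast
qed

context PK begin

lemma km1: "k - 1 \<ge> 1" using k2 by simp

lemma m_eq: "p^k = p^(k-1) * p"
proof -
  have e: "k = Suc (k-1)" using k2 by simp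
  have "p^k = p^(Suc (k-1))" using arg_cong[OF e, of "\<lambda>n. p^n"] .
  also have "\<dots> = p^(k-1) * p" by (rule power_Suc2)
  finally show ?thesis .
qed

lemma q_dvd_m: "p^(k-1) dvd p^k" by (rule pow_dvd) simp

lemma m_dvd_qq: "p^k dvd p^(k-1) * p^(k-1)"
proof -
  have "p^(k-1) * p^(k-1) = p^((k-1)+(k-1))" by (simp add: power_add)
  moreover have "p^k dvd p^((k-1)+(k-1))" using k2 by (intro pow_dvd) simp
  ultimately show ?thesis by simp
qed

lemma p_dvd_q: "p dvd p^(k-1)"
  using pow_dvd[of 1 "k-1"] km1 by simp

lemma teich:
  assumes "[a^nat (p-1) = 1] (mod p^k)" "[a = 1] (mod p)"
  shows "[a = 1] (mod p^k)"
proof -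
  obtain s where s: "a^nat (p-1) - 1 = (a - 1)*s" "[s = int (nat (p-1))] (mod p)"
    using geo[OF assms(2)] by blast
  have "[s = p - 1] (mod p)" using s(2) p_pos by simp
  moreover have "[p - 1 = -1] (mod p)" by (simp add: cong_iff_dvd_diff)
  ultimately have "[s = -1] (mod p)" by (rule cong_trans)
  have np: "\<not> p dvd s"
  proof
    assume "p dvd s"
    then have "[s = 0] (mod p)" by (simp add: cong_0_iff)
    have "[-1 = s] (mod p)" using \<open>[s = -1] (mod p)\<close> by (rule cong_sym)
    then have "[-1 = 0] (mod p)" using \<open>[s = 0] (mod p)\<close> by (rule cong_trans)
    then have "p dvd 1" by (simp add: cong_0_iff)
    then show False using p3 zdvd_imp_le[of p 1] by simp
  qed
  have cop: "coprime (p^k) s" using prime_imp_coprime[OF prime np] by simp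
  have "p^k dvd a^nat (p-1) - 1" using assms(1) by (simp add: cong_iff_dvd_diff)
  then have "p^k dvd (a - 1)*s" using s(1) by simp
  then have "p^k dvd a - 1" using coprime_dvd_mult_left_iff[OF cop] by simp
  then show ?thesis by (simp add: cong_iff_dvd_diff)
qed


lemma qmod: "(p^(k-1) * b) mod p^k = p^(k-1) * (b mod p)"
  unfolding m_eq by (rule mod_mult_mult1)

lemma p_le_m: "p \<le> p^k"
  by (rule self_le_power) (use p3 k2 in auto)

lemma qrange: "u \<in> {0..<p} \<Longrightarrow> p^(k-1)*u \<in> {0..<p^k}"
proof -
  assume uv: "u \<in> {0..<p}"
  have "p^(k-1)*u < p^(k-1)*p" using uv pow_pos by (intro mult_strict_left_mono) auto
  moreover have "0 \<le> p^(k-1)*u" using uv pow_pos by simp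
  ultimately show ?thesis using m_eq by simp
qed

definition Pset :: "mat2 set" where
  "Pset = {(1, p^(k-1)*u, p^(k-1)*v, 1) | u v. u \<in> {0..<p} \<and> v \<in> {0..<p}}"

lemma Pgrp_eq: "Pgrp p k = Pset"
proof
  show "Pgrp p k \<subseteq> Pset"
  proof
    fix x assume "x \<in> Pgrp p k"
    then obtain b c where x: "x = (1 mod p^k, (p^(k-1) * b) mod p^k, (p^(k-1) * c) mod p^k, 1 mod p^k)"
      unfolding Pgrp_def by blast
    have "x = (1, p^(k-1) * (b mod p), p^(k-1) * (c mod p), 1)"
      unfolding x qmod using m_gt1 by simp
    moreover have "b mod p \<in> {0..<p}" "c mod p \<in> {0..<p}" using p_pos by auto
    ultimately show "x \<in> Pset" unfolding Pset_def by blast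
  qed
next
  show "Pset \<subseteq> Pgrp p k"
  proof
    fix x assume "x \<in> Pset"
    then obtain u v where x: "x = (1, p^(k-1)*u, p^(k-1)*v, 1)" and uv: "u \<in> {0..<p}" "v \<in> {0..<p}"
      unfolding Pset_def by blast
    have "x = (1 mod p^k, (p^(k-1) * u) mod p^k, (p^(k-1) * v) mod p^k, 1 mod p^k)"
      unfolding x qmod using m_gt1 uv by simp
    moreover have "u \<in> {0..<p^k}" "v \<in> {0..<p^k}" using uv p_le_m by auto
    ultimately show "x \<in> Pgrp p k" unfolding Pgrp_def by blast
  qed
qed

lemma qq0: "(p^(k-1)*u * (p^(k-1)*v)) mod p^k = 0"
proof -
  have e: "p^(k-1)*u * (p^(k-1)*v) = (p^(k-1) * p^(k-1)) * (u*v)" by (simp add: algebra_simps)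
  have "p^k dvd (p^(k-1) * p^(k-1)) * (u*v)" using m_dvd_qq by (rule dvd_mult2)
  then show ?thesis unfolding e by (rule dvd_imp_mod_0)
qed

lemma qq0': "(a + p^(k-1)*u * (p^(k-1)*v)) mod p^k = a mod p^k"
proof -
  have "(a + p^(k-1)*u * (p^(k-1)*v)) mod p^k = (a + (p^(k-1)*u * (p^(k-1)*v)) mod p^k) mod p^k"
    by (simp add: mod_add_right_eq)
  then show ?thesis using qq0 by simp
qed

lemma Pset_carrier: "Pset \<subseteq> carrier (SL2 (p^k))"
proof
  fix x assume "x \<in> Pset"
  then obtain u v where x: "x = (1, p^(k-1)*u, p^(k-1)*v, 1)" and uv: "u \<in> {0..<p}" "v \<in> {0..<p}"
    unfolding Pset_def by blast
  have r: "p^(k-1)*u \<in> {0..<p^k}" "p^(k-1)*v \<in> {0..<p^k}"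
    using uv qrange by auto
  have "(1 - p^(k-1)*u * (p^(k-1)*v)) mod p^k = 1 mod p^k"
  proof -
    have "(1 - p^(k-1)*u * (p^(k-1)*v)) mod p^k = (1 - (p^(k-1)*u * (p^(k-1)*v)) mod p^k) mod p^k"
      by (simp add: mod_diff_right_eq)
    then show ?thesis using qq0 by simp
  qed
  then show "x \<in> carrier (SL2 (p^k))" using r m_gt1 unfolding x by (simp add: carrier_SL2)
qed

lemma Pset_mult:
  assumes "u \<in> {0..<p}" "v \<in> {0..<p}" "u' \<in> {0..<p}" "v' \<in> {0..<p}"
  shows "mat_mult_mod (p^k) (1, p^(k-1)*u, p^(k-1)*v, 1) (1, p^(k-1)*u', p^(k-1)*v', 1)
       = (1, p^(k-1)*((u+u') mod p), p^(k-1)*((v+v') mod p), 1)"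
proof -
  have a: "(1 * 1 + p^(k-1)*u * (p^(k-1)*v')) mod p^k = 1" using qq0'[of 1 u v'] m_gt1 by simp
  have d: "(p^(k-1)*v * (p^(k-1)*u') + 1 * 1) mod p^k = 1"
    using qq0'[of 1 v u'] m_gt1 by (simp add: add.commute)
  have b: "(1 * (p^(k-1)*u') + p^(k-1)*u * 1) mod p^k = p^(k-1)*((u+u') mod p)"
    using qmod[of "u+u'"] by (simp add: algebra_simps)
  have c: "(p^(k-1)*v * 1 + 1 * (p^(k-1)*v')) mod p^k = p^(k-1)*((v+v') mod p)"
    using qmod[of "v+v'"] by (simp add: algebra_simps)
  show ?thesis unfolding mmm a b c d ..
qed

lemma Pset_inv:
  assumes "u \<in> {0..<p}" "v \<in> {0..<p}"
  shows "inv\<^bsub>SL2 (p^k)\<^esub> (1, p^(k-1)*u, p^(k-1)*v, 1) = (1, p^(k-1)*((-u) mod p), p^(k-1)*((-v) mod p), 1)"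
proof -
  have "(1, p^(k-1)*u, p^(k-1)*v, 1) \<in> Pset" using assms unfolding Pset_def by blast
  then have c: "(1, p^(k-1)*u, p^(k-1)*v, 1) \<in> carrier (SL2 (p^k))" using Pset_carrier by blast
  have "(-(p^(k-1)*u)) mod p^k = p^(k-1)*((-u) mod p)" using qmod[of "-u"] by simp
  moreover have "(-(p^(k-1)*v)) mod p^k = p^(k-1)*((-v) mod p)" using qmod[of "-v"] by simp
  ultimately show ?thesis using inv_SL2[OF m_gt1 c] by simp
qed

lemma Pset_sub: "subgroup Pset (SL2 (p^k))"
proof -
  interpret group "SL2 (p^k)" by (rule SL2_group[OF m_gt1])
  show ?thesis
  proof (rule subgroupI)
    show "Pset \<subseteq> carrier (SL2 (p^k))" by (rule Pset_carrier)
    show "Pset \<noteq> {}" unfolding Pset_def using p_pos by auto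
  next
    fix a assume "a \<in> Pset"
    then obtain u v where a: "a = (1, p^(k-1)*u, p^(k-1)*v, 1)" and uv: "u \<in> {0..<p}" "v \<in> {0..<p}"
      unfolding Pset_def by blast
    have "(-u) mod p \<in> {0..<p}" "(-v) mod p \<in> {0..<p}" using p_pos by auto
    then show "inv\<^bsub>SL2 (p^k)\<^esub> a \<in> Pset" unfolding a Pset_inv[OF uv] Pset_def by blast
  next
    fix a b assume "a \<in> Pset" "b \<in> Pset"
    then obtain u v u' v' where a: "a = (1, p^(k-1)*u, p^(k-1)*v, 1)" and uv: "u \<in> {0..<p}" "v \<in> {0..<p}"
      and b: "b = (1, p^(k-1)*u', p^(k-1)*v', 1)" and uv': "u' \<in> {0..<p}" "v' \<in> {0..<p}"
      unfolding Pset_def by blast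
    have "(u+u') mod p \<in> {0..<p}" "(v+v') mod p \<in> {0..<p}" using p_pos by auto
    then show "a \<otimes>\<^bsub>SL2 (p^k)\<^esub> b \<in> Pset"
      unfolding a b mult_SL2 Pset_mult[OF uv uv'] Pset_def by blast
  qed
qed

lemma Pset_K1: "Pset \<subseteq> K 1"
proof
  fix x assume x: "x \<in> Pset"
  then obtain u v where xe: "x = (1, p^(k-1)*u, p^(k-1)*v, 1)"
    unfolding Pset_def by blast
  have "x \<in> carrier (SL2 (p^k))" using x Pset_carrier by blast
  moreover have "(p^(k-1)*u) mod p = 0" "(p^(k-1)*v) mod p = 0" using p_dvd_q by auto
  ultimately show "x \<in> K 1" using K_mem[of 1] p3 unfolding xe by simp
qed

abbreviation "ee \<equiv> nat (p-1)"

definition S1 :: "mat2 set" where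
  "S1 = {(a1,a2,a3,a4) | a1 a2 a3 a4. (a1,a2,a3,a4) \<in> carrier (SL2 (p^k)) \<and>
     [a1^ee = 1] (mod p^k) \<and> [a4^ee = 1] (mod p^k) \<and> p^(k-1) dvd a2 \<and> p^(k-1) dvd a3}"
definition S2 :: "mat2 set" where
  "S2 = {(a1,a2,a3,a4) | a1 a2 a3 a4. (a1,a2,a3,a4) \<in> carrier (SL2 (p^k)) \<and>
     [a2^ee = 1] (mod p^k) \<and> [a3^ee = 1] (mod p^k) \<and> p^(k-1) dvd a1 \<and> p^(k-1) dvd a4}"

lemma S1_mem: "(a1,a2,a3,a4) \<in> S1 \<longleftrightarrow> (a1,a2,a3,a4) \<in> carrier (SL2 (p^k)) \<and>
     [a1^ee = 1] (mod p^k) \<and> [a4^ee = 1] (mod p^k) \<and> p^(k-1) dvd a2 \<and> p^(k-1) dvd a3"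
  unfolding S1_def by blast
lemma S2_mem: "(a1,a2,a3,a4) \<in> S2 \<longleftrightarrow> (a1,a2,a3,a4) \<in> carrier (SL2 (p^k)) \<and>
     [a2^ee = 1] (mod p^k) \<and> [a3^ee = 1] (mod p^k) \<and> p^(k-1) dvd a1 \<and> p^(k-1) dvd a4"
  unfolding S2_def by blast

lemma GA:
  assumes "p^k dvd t" "[u^ee = 1] (mod p^k)" "[v^ee = 1] (mod p^k)"
  shows "[((u*v + t) mod p^k)^ee = 1] (mod p^k)"
proof -
  have "(u*v + t) mod p^k = (u*v) mod p^k"
  proof -
    have "(u*v + t) mod p^k = (u*v + t mod p^k) mod p^k" by (simp add: mod_add_right_eq)
    then show ?thesis using assms(1) by simp
  qed
  then have "[(u*v + t) mod p^k = u*v] (mod p^k)" by (simp add: cong_def)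
  then have "[((u*v + t) mod p^k)^ee = (u*v)^ee] (mod p^k)" by (rule cong_pow)
  moreover have "[(u*v)^ee = 1*1] (mod p^k)"
    unfolding power_mult_distrib by (rule cong_mult[OF assms(2,3)])
  ultimately show ?thesis by (simp add: cong_trans)
qed

lemma GB:
  assumes "p^k dvd t" "[u^ee = 1] (mod p^k)" "[v^ee = 1] (mod p^k)"
  shows "[((t + u*v) mod p^k)^ee = 1] (mod p^k)"
  using GA[OF assms] by (simp add: add.commute)

lemma GQ: "p^(k-1) dvd s \<Longrightarrow> p^(k-1) dvd t \<Longrightarrow> p^(k-1) dvd (s + t) mod p^k"
  using q_dvd_m by (simp add: dvd_mod_iff)

lemma MD: "p^(k-1) dvd a \<Longrightarrow> p^(k-1) dvd b \<Longrightarrow> p^k dvd a*b"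
  using mult_dvd_mono m_dvd_qq dvd_trans by blast

lemma SL2m_group: "group (SL2 (p^k))" by (rule SL2_group[OF m_gt1])

lemma prod_carrier: "x \<in> carrier (SL2 (p^k)) \<Longrightarrow> y \<in> carrier (SL2 (p^k)) \<Longrightarrow> mat_mult_mod (p^k) x y \<in> carrier (SL2 (p^k))"
  using group.subgroup_self[OF SL2m_group] subgroup.m_closed mult_SL2 by metis

lemma S_mult:
  assumes x: "x \<in> S1 \<union> S2" and y: "y \<in> S1 \<union> S2"
  shows "mat_mult_mod (p^k) x y \<in> S1 \<union> S2"
proof -
  obtain a1 a2 a3 a4 where xa: "x = (a1,a2,a3,a4)" by (cases x) auto
  obtain b1 b2 b3 b4 where yb: "y = (b1,b2,b3,b4)" by (cases y) auto
  have xc: "x \<in> carrier (SL2 (p^k))" using x xa by (auto simp: S1_mem S2_mem)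
  have yc: "y \<in> carrier (SL2 (p^k))" using y yb by (auto simp: S1_mem S2_mem)
  have pc: "((a1*b1 + a2*b3) mod p^k, (a1*b2 + a2*b4) mod p^k, (a3*b1 + a4*b3) mod p^k, (a3*b2 + a4*b4) mod p^k)
      \<in> carrier (SL2 (p^k))" using prod_carrier[OF xc yc] unfolding xa yb mmm .
  have dm: "p^(k-1) dvd u \<Longrightarrow> p^(k-1) dvd u*v" "p^(k-1) dvd v \<Longrightarrow> p^(k-1) dvd u*v" for u v :: int
    by simp_all
  have eq: "mat_mult_mod (p^k) x y = ((a1*b1 + a2*b3) mod p^k, (a1*b2 + a2*b4) mod p^k, (a3*b1 + a4*b3) mod p^k, (a3*b2 + a4*b4) mod p^k)"
    unfolding xa yb mmm ..
  show ?thesis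
  proof (cases "x \<in> S1")
    case x1: True
    then have X: "[a1^ee = 1] (mod p^k)" "[a4^ee = 1] (mod p^k)" "p^(k-1) dvd a2" "p^(k-1) dvd a3"
      using xa by (simp_all add: S1_mem)
    show ?thesis
    proof (cases "y \<in> S1")
      case True
      then have Y: "[b1^ee = 1] (mod p^k)" "[b4^ee = 1] (mod p^k)" "p^(k-1) dvd b2" "p^(k-1) dvd b3"
        using yb by (simp_all add: S1_mem)
      have "[((a1*b1 + a2*b3) mod p^k)^ee = 1] (mod p^k)" by (rule GA[OF MD[OF X(3) Y(4)] X(1) Y(1)])
      moreover have "[((a3*b2 + a4*b4) mod p^k)^ee = 1] (mod p^k)" by (rule GB[OF MD[OF X(4) Y(3)] X(2) Y(2)])
      moreover have "p^(k-1) dvd (a1*b2 + a2*b4) mod p^k" by (rule GQ) (use X Y in simp_all)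
      moreover have "p^(k-1) dvd (a3*b1 + a4*b3) mod p^k" by (rule GQ) (use X Y in simp_all)
      ultimately show ?thesis using pc unfolding eq by (simp add: S1_mem)
    next
      case False
      then have Y: "[b2^ee = 1] (mod p^k)" "[b3^ee = 1] (mod p^k)" "p^(k-1) dvd b1" "p^(k-1) dvd b4"
        using y yb by (simp_all add: S2_mem)
      have "[((a1*b2 + a2*b4) mod p^k)^ee = 1] (mod p^k)" by (rule GA[OF MD[OF X(3) Y(4)] X(1) Y(1)])
      moreover have "[((a3*b1 + a4*b3) mod p^k)^ee = 1] (mod p^k)" by (rule GB[OF MD[OF X(4) Y(3)] X(2) Y(2)])
      moreover have "p^(k-1) dvd (a1*b1 + a2*b3) mod p^k" by (rule GQ) (use X Y in simp_all)
      moreover have "p^(k-1) dvd (a3*b2 + a4*b4) mod p^k" by (rule GQ) (use X Y in simp_all)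
      ultimately show ?thesis using pc unfolding eq by (simp add: S2_mem)
    qed
  next
    case x2: False
    then have X: "[a2^ee = 1] (mod p^k)" "[a3^ee = 1] (mod p^k)" "p^(k-1) dvd a1" "p^(k-1) dvd a4"
      using x xa by (simp_all add: S2_mem)
    show ?thesis
    proof (cases "y \<in> S1")
      case True
      then have Y: "[b1^ee = 1] (mod p^k)" "[b4^ee = 1] (mod p^k)" "p^(k-1) dvd b2" "p^(k-1) dvd b3"
        using yb by (simp_all add: S1_mem)
      have "[((a1*b2 + a2*b4) mod p^k)^ee = 1] (mod p^k)" by (rule GB[OF MD[OF X(3) Y(3)] X(1) Y(2)])
      moreover have "[((a3*b1 + a4*b3) mod p^k)^ee = 1] (mod p^k)" by (rule GA[OF MD[OF X(4) Y(4)] X(2) Y(1)])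
      moreover have "p^(k-1) dvd (a1*b1 + a2*b3) mod p^k" by (rule GQ) (use X Y in simp_all)
      moreover have "p^(k-1) dvd (a3*b2 + a4*b4) mod p^k" by (rule GQ) (use X Y in simp_all)
      ultimately show ?thesis using pc unfolding eq by (simp add: S2_mem)
    next
      case False
      then have Y: "[b2^ee = 1] (mod p^k)" "[b3^ee = 1] (mod p^k)" "p^(k-1) dvd b1" "p^(k-1) dvd b4"
        using y yb by (simp_all add: S2_mem)
      have "[((a1*b1 + a2*b3) mod p^k)^ee = 1] (mod p^k)" by (rule GB[OF MD[OF X(3) Y(3)] X(1) Y(2)])
      moreover have "[((a3*b2 + a4*b4) mod p^k)^ee = 1] (mod p^k)" by (rule GA[OF MD[OF X(4) Y(4)] X(2) Y(1)])
      moreover have "p^(k-1) dvd (a1*b2 + a2*b4) mod p^k" by (rule GQ) (use X Y in simp_all)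
      moreover have "p^(k-1) dvd (a3*b1 + a4*b3) mod p^k" by (rule GQ) (use X Y in simp_all)
      ultimately show ?thesis using pc unfolding eq by (simp add: S1_mem)
    qed
  qed
qed
end


context PK begin

lemma even_ee: "even ee"
proof -
  have "even (p - 1)" using oddp by simp
  then show ?thesis using p_pos by (simp add: even_nat_iff)
qed

lemma neg_pow: "[((-a) mod p^k)^ee = 1] (mod p^k) \<longleftrightarrow> [a^ee = 1] (mod p^k)"
proof -
  have "[((-a) mod p^k)^ee = (-a)^ee] (mod p^k)" by (rule cong_pow) (simp add: cong_def)
  moreover have "(-a)^ee = a^ee" using even_ee by simp
  ultimately have "[((-a) mod p^k)^ee = a^ee] (mod p^k)" by simp
  then show ?thesis using cong_sym cong_trans by metis
qed

lemma S_inv: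
  assumes x: "x \<in> S1 \<union> S2"
  shows "inv\<^bsub>SL2 (p^k)\<^esub> x \<in> S1 \<union> S2"
proof -
  obtain a1 a2 a3 a4 where xa: "x = (a1,a2,a3,a4)" by (cases x) auto
  have xc: "(a1,a2,a3,a4) \<in> carrier (SL2 (p^k))" using x xa by (auto simp: S1_mem S2_mem)
  have ic: "(a4, (-a2) mod p^k, (-a3) mod p^k, a1) \<in> carrier (SL2 (p^k))"
    by (rule inv_prod_SL2(2)[OF m_gt1 xc])
  have iv: "inv\<^bsub>SL2 (p^k)\<^esub> x = (a4, (-a2) mod p^k, (-a3) mod p^k, a1)"
    unfolding xa by (rule inv_SL2[OF m_gt1 xc])
  have qd: "p^(k-1) dvd a \<Longrightarrow> p^(k-1) dvd (-a) mod p^k" for a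
    using q_dvd_m by (simp add: dvd_mod_iff)
  show ?thesis
  proof (cases "x \<in> S1")
    case True
    then show ?thesis using ic qd unfolding iv by (simp add: S1_mem xa)
  next
    case False
    then have "x \<in> S2" using x by simp
    then show ?thesis using ic qd neg_pow unfolding iv by (simp add: S2_mem xa)
  qed
qed

lemma negI_S1: "(p^k - 1, 0, 0, p^k - 1) \<in> S1"
proof -
  have "[(p^k - 1)^ee = (-1)^ee] (mod p^k)" by (rule cong_pow) (simp add: cong_iff_dvd_diff)
  then have "[(p^k - 1)^ee = 1] (mod p^k)" using even_ee by simp
  then show ?thesis using negI_carrier[OF m_gt1] by (simp add: S1_mem)
qed

lemma I_S1: "(1,0,0,1) \<in> S1"
  using I_carrier[OF m_gt1] by (simp add: S1_mem)

lemma Pset_S1: "Pset \<subseteq> S1"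
proof
  fix x assume x: "x \<in> Pset"
  then obtain u v where xe: "x = (1, p^(k-1)*u, p^(k-1)*v, 1)" unfolding Pset_def by blast
  have "x \<in> carrier (SL2 (p^k))" using x Pset_carrier by blast
  then show "x \<in> S1" unfolding xe by (simp add: S1_mem)
qed

lemma S_K1_P:
  assumes h: "h \<in> S1 \<union> S2" and hK: "h \<in> K 1"
  shows "h \<in> Pset"
proof -
  obtain h1 h2 h3 h4 where ha: "h = (h1,h2,h3,h4)" by (cases h) auto
  have k: "(h1,h2,h3,h4) \<in> carrier (SL2 (p^k))" "h1 mod p = 1" "h2 mod p = 0" "h3 mod p = 0" "h4 mod p = 1"
    using K_mem[of 1 h1 h2 h3 h4] hK ha by auto
  have r: "h1 \<in> {0..<p^k}" "h2 \<in> {0..<p^k}" "h3 \<in> {0..<p^k}" "h4 \<in> {0..<p^k}"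
    and det: "(h1*h4 - h2*h3) mod p^k = 1 mod p^k"
    using k(1) by (simp_all add: carrier_SL2)
  have nS2: "h \<notin> S2"
  proof
    assume "h \<in> S2"
    then have "p^(k-1) dvd h1" using ha by (simp add: S2_mem)
    then have "p dvd h1" using p_dvd_q dvd_trans by blast
    then show False using k(2) by simp
  qed
  then have S: "[h1^ee = 1] (mod p^k)" "p^(k-1) dvd h2" "p^(k-1) dvd h3"
    using h ha by (simp_all add: S1_mem)
  have "[h1 = 1] (mod p)" using k(2) p3 by (simp add: cong_def)
  then have "[h1 = 1] (mod p^k)" by (rule teich[OF S(1)])
  then have h1: "h1 = 1" using r(1) m_gt1 by (intro cong_less_imp_eq_int) auto
  have "p^k dvd h2*h3" by (rule MD[OF S(2,3)])
  then have "(h4 - h2*h3) mod p^k = h4 mod p^k"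
    by (metis mod_diff_right_eq dvd_imp_mod_0 diff_zero)
  then have "h4 mod p^k = 1" using det h1 m_gt1 by simp
  then have h4: "h4 = 1" using r(4) by simp
  obtain u where u: "h2 = p^(k-1)*u" using S(2) by (auto elim!: dvdE)
  obtain v where v: "h3 = p^(k-1)*v" using S(3) by (auto elim!: dvdE)
  have ur: "u \<in> {0..<p}"
  proof -
    have "0 \<le> p^(k-1)*u" "p^(k-1)*u < p^(k-1)*p" using r(2) u m_eq by auto
    then show ?thesis using pow_pos[of "k-1"]
      by (auto simp: zero_le_mult_iff mult_less_cancel_left)
  qed
  have vr: "v \<in> {0..<p}"
  proof -
    have "0 \<le> p^(k-1)*v" "p^(k-1)*v < p^(k-1)*p" using r(3) v m_eq by auto
    then show ?thesis using pow_pos[of "k-1"]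
      by (auto simp: zero_le_mult_iff mult_less_cancel_left)
  qed
  show ?thesis unfolding Pset_def ha h1 h4 u v using ur vr by blast
qed

lemma negI_notK1: "(p^k - 1, 0, 0, p^k - 1) \<notin> K 1"
proof
  assume "(p^k - 1, 0, 0, p^k - 1) \<in> K 1"
  then have e: "(p^k - 1) mod p = 1" using K_mem[of 1] by simp
  have "p dvd p^k" using pow_dvd[of 1 k] k2 by simp
  then have "(p^k - 1) mod p = (0 - 1) mod p" by (simp add: mod_diff_left_eq[symmetric] dvd_imp_mod_0)
  then have "(p^k - 1) mod p = p - 1" using p_pos by (simp add: zmod_minus1)
  then show False using e p3 by simp
qed

lemma K1Z: "K 1 \<inter> centre_pm (p^k) \<subseteq> {\<one>\<^bsub>SL2 (p^k)\<^esub>}"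
  using negI_notK1 m_gt1 by (auto simp: centre_eq one_SL2)

end


locale PKW = PK +
  fixes w :: int
  assumes wr: "w \<in> {0..<p^k}" and word: "ord (nat (p^k)) (nat w) = nat (p - 1)"
begin

lemma w_facts: "coprime w (p^k)" "[w^ee = 1] (mod p^k)"
proof -
  have "ord (nat (p^k)) (nat w) \<noteq> 0" using word p3 by simp
  then have c: "coprime (nat (p^k)) (nat w)" using ord_eq_0[of "nat (p^k)" "nat w"] by simp
  have w0: "w \<ge> 0" using wr by simp
  have m0: "p^k \<ge> 0" using pow_pos[of k] by simp
  have e1: "int (nat (p^k)) = p^k" using m0 by simp
  have e2: "int (nat w) = w" using w0 by simp
  have "coprime (int (nat (p^k))) (int (nat w))" using c by (simp only: coprime_int_iff)
  then have "coprime (p^k) w" unfolding e1 e2 .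
  then show "coprime w (p^k)" by (rule coprime_commute[THEN iffD1])
  have "[nat w ^ ord (nat (p^k)) (nat w) = 1] (mod nat (p^k))" using ord_works by blast
  then have "[nat w ^ ee = 1] (mod nat (p^k))" using word by simp
  then have "[int (nat w ^ ee) = int 1] (mod int (nat (p^k)))" by (simp only: cong_int_iff)
  then show "[w^ee = 1] (mod p^k)" using w0 m0 by simp
qed

definition vv where "vv = inv_modm (p^k) w"

lemma vv_facts: "vv \<in> {0..<p^k}" "(w * vv) mod p^k = 1"
proof -
  obtain s where s: "[w * s = 1] (mod p^k)" using cong_solve_coprime_int[OF w_facts(1)] by blast
  have ex: "s mod p^k \<in> {0..<p^k} \<and> (w * (s mod p^k)) mod p^k = 1 mod p^k"
  proof
    show "s mod p^k \<in> {0..<p^k}" using pow_pos[of k] by simp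
    have "(w * (s mod p^k)) mod p^k = (w * s) mod p^k" by (simp add: mod_mult_right_eq)
    then show "(w * (s mod p^k)) mod p^k = 1 mod p^k" using s by (simp add: cong_def)
  qed
  have un: "v1 = v2" if "v1 \<in> {0..<p^k} \<and> (w * v1) mod p^k = 1 mod p^k"
      "v2 \<in> {0..<p^k} \<and> (w * v2) mod p^k = 1 mod p^k" for v1 v2
  proof -
    have "[w * v1 = w * v2] (mod p^k)" using that by (simp add: cong_def)
    then have "[v1 = v2] (mod p^k)" using cong_mult_lcancel[OF w_facts(1)] by blast
    then show ?thesis using that by (intro cong_less_imp_eq_int) auto
  qed
  have "vv \<in> {0..<p^k} \<and> (w * vv) mod p^k = 1 mod p^k"
    unfolding vv_def inv_modm_def by (rule theI[of _ "s mod p^k"]) (use ex un in blast)+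
  then show "vv \<in> {0..<p^k}" "(w * vv) mod p^k = 1" using m_gt1 by simp_all
qed

lemma vv_pow: "[vv^ee = 1] (mod p^k)"
proof -
  have "[(w*vv)^ee = 1^ee] (mod p^k)" by (rule cong_pow) (use vv_facts(2) m_gt1 in \<open>simp add: cong_def\<close>)
  then have a: "[w^ee * vv^ee = 1] (mod p^k)" by (simp add: power_mult_distrib)
  have "[w^ee * vv^ee = 1 * vv^ee] (mod p^k)" by (rule cong_mult[OF w_facts(2) cong_refl])
  then have "[vv^ee = w^ee * vv^ee] (mod p^k)" by (simp add: cong_sym)
  then show ?thesis using a by (rule cong_trans)
qed

lemma Qgens_S: "Qgens (p^k) w \<subseteq> S1 \<union> S2"
proof -
  have D: "(w mod p^k, 0, 0, vv) \<in> S1"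
  proof -
    have "w mod p^k = w" using wr by simp
    moreover have "(w * vv - 0 * 0) mod p^k = 1 mod p^k" using vv_facts m_gt1 by simp
    ultimately show ?thesis using wr vv_facts w_facts vv_pow by (simp add: S1_mem carrier_SL2)
  qed
  have J: "(0, 1 mod p^k, (-1) mod p^k, 0) \<in> S2"
  proof -
    have c: "(0, 1 mod p^k, (-1) mod p^k, 0) \<in> carrier (SL2 (p^k))"
    proof -
      have "(0 * 0 - 1 mod p^k * ((-1) mod p^k)) mod p^k = (-(p^k - 1)) mod p^k"
        using m_gt1 by (simp add: zmod_minus1)
      then have "(0 * 0 - 1 mod p^k * ((-1) mod p^k)) mod p^k = 1" using neg_neg1[OF m_gt1] by simp
      then show ?thesis using m_gt1 by (simp add: carrier_SL2)
    qed
    have "[((-1) mod p^k)^ee = 1] (mod p^k)" using neg_pow[of 1] by simp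
    then show ?thesis using c m_gt1 by (simp add: S2_mem)
  qed
  show ?thesis unfolding Qgens_def vv_def[symmetric] using D J by blast
qed

lemma gens_S: "Pgrp p k \<union> Qgens (p^k) w \<subseteq> S1 \<union> S2"
  using Qgens_S Pset_S1 Pgrp_eq by blast

lemma S_carrier: "S1 \<union> S2 \<subseteq> carrier (SL2 (p^k))"
proof
  fix x assume "x \<in> S1 \<union> S2"
  then show "x \<in> carrier (SL2 (p^k))" by (cases x) (auto simp: S1_mem S2_mem)
qed

lemma Y_S: "generate (SL2 (p^k)) (Pgrp p k \<union> Qgens (p^k) w) \<subseteq> S1 \<union> S2"
proof
  fix x assume "x \<in> generate (SL2 (p^k)) (Pgrp p k \<union> Qgens (p^k) w)"
  then show "x \<in> S1 \<union> S2"
  proof (induction rule: generate.induct)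
    case one
    then show ?case using I_S1 m_gt1 by (simp add: one_SL2)
  next
    case (incl h)
    then show ?case using gens_S by blast
  next
    case (inv h)
    then show ?case using gens_S S_inv by blast
  next
    case (eng h1 h2)
    then show ?case using S_mult by (simp add: mult_SL2)
  qed
qed

end

context PKW begin

lemma Z_sub: "subgroup (centre_pm (p^k)) (SL2 (p^k))"
  using Z_normal[OF m_gt1] normal_def by blast

lemma K1_eq: "kernel (SL2 (p^k)) (SL2 p) (reduce_mod p) = K 1"
  by (simp add: K_def)

lemma part3:
  "(\<lambda>g. centre_pm (p^k) #>\<^bsub>SL2 (p^k)\<^esub> g) ` generate (SL2 (p^k)) (Pgrp p k \<union> Qgens (p^k) w)
   \<inter> (\<lambda>g. centre_pm (p^k) #>\<^bsub>SL2 (p^k)\<^esub> g) ` K 1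
   = (\<lambda>g. centre_pm (p^k) #>\<^bsub>SL2 (p^k)\<^esub> g) ` Pgrp p k"
proof
  show "(\<lambda>g. centre_pm (p^k) #>\<^bsub>SL2 (p^k)\<^esub> g) ` Pgrp p k \<subseteq>
    (\<lambda>g. centre_pm (p^k) #>\<^bsub>SL2 (p^k)\<^esub> g) ` generate (SL2 (p^k)) (Pgrp p k \<union> Qgens (p^k) w)
   \<inter> (\<lambda>g. centre_pm (p^k) #>\<^bsub>SL2 (p^k)\<^esub> g) ` K 1"
  proof -
    have "Pgrp p k \<subseteq> generate (SL2 (p^k)) (Pgrp p k \<union> Qgens (p^k) w)"
      using generate.incl[of _ "Pgrp p k \<union> Qgens (p^k) w" "SL2 (p^k)"] by blast
    moreover have "Pgrp p k \<subseteq> K 1" using Pgrp_eq Pset_K1 by simp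
    ultimately show ?thesis by blast
  qed
next
  show "(\<lambda>g. centre_pm (p^k) #>\<^bsub>SL2 (p^k)\<^esub> g) ` generate (SL2 (p^k)) (Pgrp p k \<union> Qgens (p^k) w)
   \<inter> (\<lambda>g. centre_pm (p^k) #>\<^bsub>SL2 (p^k)\<^esub> g) ` K 1
   \<subseteq> (\<lambda>g. centre_pm (p^k) #>\<^bsub>SL2 (p^k)\<^esub> g) ` Pgrp p k"
  proof
    fix C assume "C \<in> (\<lambda>g. centre_pm (p^k) #>\<^bsub>SL2 (p^k)\<^esub> g) ` generate (SL2 (p^k)) (Pgrp p k \<union> Qgens (p^k) w)
     \<inter> (\<lambda>g. centre_pm (p^k) #>\<^bsub>SL2 (p^k)\<^esub> g) ` K 1"
    then obtain g h where g: "g \<in> generate (SL2 (p^k)) (Pgrp p k \<union> Qgens (p^k) w)" and h: "h \<in> K 1"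
      and Cg: "C = centre_pm (p^k) #>\<^bsub>SL2 (p^k)\<^esub> g" and Ch: "C = centre_pm (p^k) #>\<^bsub>SL2 (p^k)\<^esub> h"
      by blast
    have gS: "g \<in> S1 \<union> S2" using g Y_S by blast
    have hc: "h \<in> carrier (SL2 (p^k))" using h K_carrier by blast
    have "h \<in> centre_pm (p^k) #>\<^bsub>SL2 (p^k)\<^esub> g"
      using group.repr_independenceD[OF SL2m_group Z_sub hc] Cg Ch by simp
    then obtain z where z: "z \<in> centre_pm (p^k)" and hz: "h = z \<otimes>\<^bsub>SL2 (p^k)\<^esub> g"
      unfolding r_coset_def by blast
    have "z \<in> S1" using z I_S1 negI_S1 m_gt1 by (auto simp: centre_eq)
    then have "h \<in> S1 \<union> S2" using S_mult[OF _ gS] hz by (simp add: mult_SL2)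
    then have "h \<in> Pset" using S_K1_P h by blast
    then show "C \<in> (\<lambda>g. centre_pm (p^k) #>\<^bsub>SL2 (p^k)\<^esub> g) ` Pgrp p k"
      using Ch Pgrp_eq by blast
  qed
qed

definition phi :: "mat2 \<Rightarrow> int \<times> int" where
  "phi x = (case x of (a1,a2,a3,a4) \<Rightarrow> (a2 div p^(k-1), a3 div p^(k-1)))"

lemma phi_P: "phi (1, p^(k-1)*u, p^(k-1)*v, 1) = (u, v)"
proof -
  have "p^(k-1) \<noteq> 0" using pow_pos[of "k-1"] by linarith
  then show ?thesis by (simp add: phi_def)
qed

lemma P_iso: "(SL2 (p^k))\<lparr>carrier := Pset\<rparr> \<cong> (cyc (nat p) \<times>\<times> cyc (nat p))"
proof -
  have cc: "carrier (cyc (nat p) \<times>\<times> cyc (nat p)) = {0..<p} \<times> {0..<p}"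
    by (simp add: DirProd_def carrier_cyc)
  have hom: "phi \<in> hom ((SL2 (p^k))\<lparr>carrier := Pset\<rparr>) (cyc (nat p) \<times>\<times> cyc (nat p))"
  proof (rule homI)
    fix x assume "x \<in> carrier ((SL2 (p^k))\<lparr>carrier := Pset\<rparr>)"
    then obtain u v where x: "x = (1, p^(k-1)*u, p^(k-1)*v, 1)" and uv: "u \<in> {0..<p}" "v \<in> {0..<p}"
      unfolding Pset_def by auto
    show "phi x \<in> carrier (cyc (nat p) \<times>\<times> cyc (nat p))" unfolding cc x phi_P using uv by simp
  next
    fix x y assume "x \<in> carrier ((SL2 (p^k))\<lparr>carrier := Pset\<rparr>)" "y \<in> carrier ((SL2 (p^k))\<lparr>carrier := Pset\<rparr>)"
    then obtain u v u' v' where x: "x = (1, p^(k-1)*u, p^(k-1)*v, 1)" and uv: "u \<in> {0..<p}" "v \<in> {0..<p}"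
      and y: "y = (1, p^(k-1)*u', p^(k-1)*v', 1)" and uv': "u' \<in> {0..<p}" "v' \<in> {0..<p}"
      unfolding Pset_def by auto
    show "phi (x \<otimes>\<^bsub>(SL2 (p^k))\<lparr>carrier := Pset\<rparr>\<^esub> y) = phi x \<otimes>\<^bsub>cyc (nat p) \<times>\<times> cyc (nat p)\<^esub> phi y"
    proof -
      have e: "x \<otimes>\<^bsub>(SL2 (p^k))\<lparr>carrier := Pset\<rparr>\<^esub> y = (1, p^(k-1)*((u+u') mod p), p^(k-1)*((v+v') mod p), 1)"
        using Pset_mult[OF uv uv'] unfolding x y by (simp add: mult_SL2)
      show ?thesis
        unfolding e unfolding x y phi_P using p_pos by (simp add: DirProd_def natp)
    qed
  qed
  have bij: "bij_betw phi Pset ({0..<p} \<times> {0..<p})"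
  proof (rule bij_betwI')
    fix x y assume "x \<in> Pset" "y \<in> Pset"
    then obtain u v u' v' where x: "x = (1, p^(k-1)*u, p^(k-1)*v, 1)"
      and y: "y = (1, p^(k-1)*u', p^(k-1)*v', 1)"
      unfolding Pset_def by auto
    show "(phi x = phi y) = (x = y)" unfolding x y phi_P using pow_pos[of "k-1"] p_pos by auto
  next
    fix x assume "x \<in> Pset"
    then obtain u v where x: "x = (1, p^(k-1)*u, p^(k-1)*v, 1)" and uv: "u \<in> {0..<p}" "v \<in> {0..<p}"
      unfolding Pset_def by auto
    show "phi x \<in> {0..<p} \<times> {0..<p}" unfolding x phi_P using uv by simp
  next
    fix z assume "z \<in> {0..<p} \<times> {0..<p}"
    then obtain u v where z: "z = (u,v)" and uv: "u \<in> {0..<p}" "v \<in> {0..<p}" by auto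
    have "(1, p^(k-1)*u, p^(k-1)*v, 1) \<in> Pset" unfolding Pset_def using uv by blast
    then show "\<exists>x\<in>Pset. z = phi x" unfolding z using phi_P[of u v, symmetric] by blast
  qed
  have "phi \<in> iso ((SL2 (p^k))\<lparr>carrier := Pset\<rparr>) (cyc (nat p) \<times>\<times> cyc (nat p))"
    using hom bij cc by (simp add: iso_def)
  then show ?thesis unfolding is_iso_def by blast
qed

lemma part4:
  "(SL2 (p^k) Mod centre_pm (p^k))\<lparr>carrier := (\<lambda>g. centre_pm (p^k) #>\<^bsub>SL2 (p^k)\<^esub> g) ` Pgrp p k\<rparr>
     \<cong> (cyc (nat p) \<times>\<times> cyc (nat p))"
proof -
  have "Pset \<inter> centre_pm (p^k) \<subseteq> {\<one>\<^bsub>SL2 (p^k)\<^esub>}" using Pset_K1 K1Z by blast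
  then have "(SL2 (p^k) Mod centre_pm (p^k))\<lparr>carrier := (\<lambda>g. centre_pm (p^k) #>\<^bsub>SL2 (p^k)\<^esub> g) ` Pset\<rparr>
     \<cong> (SL2 (p^k))\<lparr>carrier := Pset\<rparr>"
    by (rule quot_iso[OF SL2m_group Z_normal[OF m_gt1] Pset_sub])
  then show ?thesis unfolding Pgrp_eq by (rule iso_trans[OF _ P_iso])
qed

end

context PK begin

lemma K_proper:
  assumes l: "1 \<le> l" "l < k"
  shows "K (Suc l) \<subset> K l"
proof -
  have sub: "K (Suc l) \<subseteq> K l" using K_mono[OF l(1)] by blast
  have "(1,0,0) \<in> carrier Hc" using p3 by (simp add: carrier_Hc)
  then obtain x where x: "x \<in> K l" and fx: "fK l x = (1,0,0)"
    using fK_surj[OF l] by (metis imageE)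
  have "x \<notin> K (Suc l)"
  proof
    assume "x \<in> K (Suc l)"
    then have "x \<in> kernel ((SL2 (p^k))\<lparr>carrier := K l\<rparr>) Hc (fK l)" using fK_kernel[OF l] by simp
    then have "fK l x = (0,0,0)" by (simp add: kernel_def one_Hc)
    then show False using fx by simp
  qed
  then show ?thesis using sub x by blast
qed

end

theorem lemma3p2:
  fixes p :: int and k :: nat and w :: int
  assumes "Factorial_Ring.prime p" and "odd p" and "k \<ge> 2"
    and "w \<in> {0..<p^k}" and "ord (nat (p^k)) (nat w) = nat (p - 1)"
  defines "Xh \<equiv> SL2 (p^k)"
    and "Z \<equiv> centre_pm (p^k)"
    and "Nh \<equiv> kernel (SL2 (p^k)) (SL2 p) (reduce_mod p)"
    and "Yh \<equiv> generate (SL2 (p^k)) (Pgrp p k \<union> Qgens (p^k) w)"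
  shows "(Xh Mod Z)\<lparr>carrier := (\<lambda>g. Z #>\<^bsub>Xh\<^esub> g) ` Nh\<rparr> \<cong> Xh\<lparr>carrier := Nh\<rparr>
    \<and> (\<exists>Ns :: nat \<Rightarrow> mat2 set.
           Ns 1 = Nh \<and> Ns k = {\<one>\<^bsub>Xh\<^esub>}
           \<and> (\<forall>l \<in> {1..k}. Ns l \<lhd> Xh)
           \<and> (\<forall>l \<in> {1..<k}. Ns (Suc l) \<subset> Ns l
                 \<and> (Xh\<lparr>carrier := Ns l\<rparr> Mod Ns (Suc l)) \<cong> (cyc (nat p) \<times>\<times> cyc (nat p) \<times>\<times> cyc (nat p))))
    \<and> (\<lambda>g. Z #>\<^bsub>Xh\<^esub> g) ` Yh \<inter> (\<lambda>g. Z #>\<^bsub>Xh\<^esub> g) ` Nh = (\<lambda>g. Z #>\<^bsub>Xh\<^esub> g) ` Pgrp p k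
    \<and> (Xh Mod Z)\<lparr>carrier := (\<lambda>g. Z #>\<^bsub>Xh\<^esub> g) ` Pgrp p k\<rparr> \<cong> (cyc (nat p) \<times>\<times> cyc (nat p))"
proof -
  interpret PKW p k w
    by unfold_locales (use assms(1-5) in auto)
  have Nh: "Nh = K 1" unfolding Nh_def by (rule K1_eq)
  have k1: "1 \<le> k" using assms(3) by simp
  have c1: "(Xh Mod Z)\<lparr>carrier := (\<lambda>g. Z #>\<^bsub>Xh\<^esub> g) ` Nh\<rparr> \<cong> Xh\<lparr>carrier := Nh\<rparr>"
    unfolding Xh_def Z_def Nh
    by (rule quot_iso[OF SL2m_group Z_normal[OF m_gt1] K_sub[OF order_refl k1] K1Z])
  have c2: "\<exists>Ns :: nat \<Rightarrow> mat2 set.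
           Ns 1 = Nh \<and> Ns k = {\<one>\<^bsub>Xh\<^esub>}
           \<and> (\<forall>l \<in> {1..k}. Ns l \<lhd> Xh)
           \<and> (\<forall>l \<in> {1..<k}. Ns (Suc l) \<subset> Ns l
                 \<and> (Xh\<lparr>carrier := Ns l\<rparr> Mod Ns (Suc l)) \<cong> (cyc (nat p) \<times>\<times> cyc (nat p) \<times>\<times> cyc (nat p)))"
  proof (rule exI[of _ K], intro conjI ballI)
    show "K 1 = Nh" using Nh by simp
    show "K k = {\<one>\<^bsub>Xh\<^esub>}" unfolding Xh_def by (rule K_k)
  next
    fix l assume "l \<in> {1..k}"
    then show "K l \<lhd> Xh" unfolding Xh_def using K_normal by simp
  next
    fix l assume "l \<in> {1..<k}"
    then have l: "1 \<le> l" "l < k" by auto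
    show "K (Suc l) \<subset> K l" by (rule K_proper[OF l])
    show "Xh\<lparr>carrier := K l\<rparr> Mod K (Suc l) \<cong> cyc (nat p) \<times>\<times> cyc (nat p) \<times>\<times> cyc (nat p)"
      unfolding Xh_def by (rule quotient_step[OF l])
  qed
  have c3: "(\<lambda>g. Z #>\<^bsub>Xh\<^esub> g) ` Yh \<inter> (\<lambda>g. Z #>\<^bsub>Xh\<^esub> g) ` Nh = (\<lambda>g. Z #>\<^bsub>Xh\<^esub> g) ` Pgrp p k"
    unfolding Xh_def Z_def Nh Yh_def by (rule part3)
  have c4: "(Xh Mod Z)\<lparr>carrier := (\<lambda>g. Z #>\<^bsub>Xh\<^esub> g) ` Pgrp p k\<rparr> \<cong> (cyc (nat p) \<times>\<times> cyc (nat p))"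
    unfolding Xh_def Z_def by (rule part4)
  show ?thesis using c1 c2 c3 c4 by blast
qed
end
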